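(* Let $\mathcal R$ be a strong CCTRS and $s,t\in\mathcal T(\mathcal G,\mathcal V)$. (1) If $s\rightharpoonup^* t$ is a complexity-conscious reduction with cost $N$, then there is a context-sensitive reduction $\zeta(s)\to^*_{\Xi(\mathcal R),\mu}\zeta(t)$ with cost $N$. (2) If $s\rightharpoonup^\infty$, then there is an infinite $(\Xi(\mathcal R),\mu)$-reduction starting from $\zeta(s)$.
   Context: A CCTRS over $\mathcal F$ is a set $\mathcal R$ of conditional rules each of the form $f(\ell_1,\dots,\ell_n)\to r\Leftarrow a_1\approx b_1,\dots,a_k\approx b_k$ (defined symbols are roots of left-hand sides, others constructors; constructor terms contain only constructors and variables) where $\ell_1,\dots,\ell_n,b_1,\dots,b_k$ are constructor terms, the terms $f(\ell_1,\dots,\ell_n),b_1,\dots,b_k$ pairwise share no variables, $\mathrm{Var}(r)\subseteq\mathrm{Var}(\ell_1,\dots,\ell_n,b_1,\dots,b_k)$, and $\mathrm{Var}(a_i)\subseteq\mathrm{Var}(\ell_1,\dots,\ell_n,b_1,\dots,b_{i-1})$. $\mathcal R{\restriction}f$ is the set of rules with left-hand root $f$. A strong CCTRS is a CCTRS with each $\mathcal R{\restriction}f$ finite and each $f(\ell_1,\dots,\ell_n)$ and $b_j$ linear. Let $m_f=|\mathcal R{\restriction}f|$ (0 for constructors), with fixed enumeration $\rho^f_1,\dots,\rho^f_{m_f}$. Labeled reduction: $\mathcal G$ consists of the constructors and symbols $f_R$ ($R\subseteq\mathcal R{\restriction}f$, same arity as $f$); $\mathrm{label}$ replaces each defined $f$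 by $f_{\mathcal R\restriction f}$; $\mathrm{erase}$ removes labels; labeled normal forms are terms over constructors, symbols $f_\emptyset$ and variables. $s\rightharpoonup t$ is defined inductively: either (i, "$\bot$-step") there are $p$ and a rule $\rho\colon\ell\to r\Leftarrow c$ with $s|_p=f_R(s_1,\dots,s_n)$, $\rho\in R$, $t=s[f_{R\setminus\{\rho\}}(s_1,\dots,s_n)]_p$, and linear labeled normal forms $u_1,\dots,u_n$ on fresh variables and $\sigma$ with $s|_p=f_R(u_1,\dots,u_n)\sigma$ and $f(\mathrm{erase}(u_1),\dots,\mathrm{erase}(u_n))$ not unifiable with $\ell$; or (ii) there are $p$, $\rho\colon f(\ell_1,\dots,\ell_n)\to r\Leftarrow a_1\approx b_1,\dots,a_k\approx b_k$, $\sigma$, $0\le j\le k$ with $s|_p=f_R(\ell_1\sigma,\dots,\ell_n\sigma)$, $\rho\in R$, $\mathrm{label}(a_i)\sigma\rightharpoonup^*b_i\sigma$ for $1\le i\le j$, and either (successful) $j=k$, $t=s[\mathrm{label}(r)\sigma]_p$, or (failed) $j<k$, $\mathrm{label}(a_{j+1})\sigma\rightharpoonup^*u\tau$ for a linear labeled normal form $u$ with $\mathrm{erase}(u)$ not unifiable with $b_{j+1}$, and $t=s[f_{R\setminus\{\rho\}}(\ell_1\sigma,\dots,\ell_n\sigma)]_p$. A complexity-conscious reduction is a labeled reduction together with chosen witnessing condition reductions; its cost is the sum of its step costs, where a $\bot$-step costs $0$, a successful step costs $1$ plus the costs of the $k$ condition reductions, and a failed step costs the sum of the costs of the $j$ condition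 reductions and of $\mathrm{label}(a_{j+1})\sigma\rightharpoonup^*u\tau$. $s\rightharpoonup_\rhd t$ if there are $p$, $\rho$ as in (ii), $\sigma$, $0\le j<k$ with $s|_p=f_R(\ell_1\sigma,\dots,\ell_n\sigma)$, $\rho\in R$, $\mathrm{label}(a_i)\sigma\rightharpoonup^*b_i\sigma$ for $i\le j$, and $t=\mathrm{label}(a_{j+1})\sigma$; $s\rightharpoonup^\infty$ means an infinite sequence of $\rightharpoonup\cup\rightharpoonup_\rhd$ steps from $s$. The transformed system: signature $\mathcal H$ with constants $\bot,\top$ ($\mu=\emptyset$); every $f\in\mathcal F$ of arity $n$ as a symbol of arity $n+m_f$ with $\mu(f)=\{1,\dots,n\}$; and for every defined $f$ of arity $n$, every $\rho^f_i$ with $k>0$ conditions and $1\le j\le k$ a symbol $f_i^j$ of arity $n+m_f+j-1$ with $\mu(f_i^j)=\{n+i+j-1\}$. A position is active in $t$ if it is $\epsilon$ or $iq$ with $i\in\mu(\mathrm{root}(t))$ and $q$ active in $t|_i$; $\to_{\Xi(\mathcal R),\mu}$ rewrites only at active positions. $\xi_\star$ ($\star\in\{\bot,\top\}$): identity on variables, homomorphic on constructors, $f(t_1..t_n)\mapsto f(\xi_\star(t_1),\dots,\xi_\star(t_n),\star,\dots,\star)$ ($m_f$ copies) for defined $f$; $\bot$-patterns are linear terms $\xi_\bot(t)$. For a linear constructor term $t$: $\mathrm{AP}(x)=\emptyset$, and $\mathrm{AP}(f(t_1,\dots,t_n))$ consists of $g(x_1,\dots,x_m)$ for every constructor $g\neq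 f$ of arity $m$, $g(x_1,\dots,x_m,\bot,\dots,\bot)$ for every defined $g$ of arity $m$, and $f(x_1,\dots,x_{i-1},u,x_{i+1},\dots,x_n)$ for $u\in\mathrm{AP}(t_i)$ (fresh distinct $x$'s). Notation: $\langle t_1,\dots,t_n\rangle[u_1,\dots,u_j]_i$ is $t_1,\dots,t_{i-1},u_1,\dots,u_j,t_{i+1},\dots,t_n$. For the $i$-th rule $\rho_i\colon f(\vec\ell)\to r\Leftarrow a_1\approx b_1,\dots,a_k\approx b_k$ of $\mathcal R{\restriction}f$ and fresh distinct $x_1,\dots,x_{m_f},y_1,\dots,y_n$, $\Xi(\mathcal R)$ contains: $(1)$ if $k=0$: $f(\vec\ell,\langle\vec x\rangle[\top]_i)\to\xi_\top(r)$; if $k>0$: $(2)$ $f(\vec\ell,\langle\vec x\rangle[\top]_i)\to f_i^1(\vec\ell,\langle\vec x\rangle[\xi_\top(a_1)]_i)$, $(3)$ $f_i^k(\vec\ell,\langle\vec x\rangle[b_1,\dots,b_k]_i)\to\xi_\top(r)$, $(4)$ for $1\le j<k$: $f_i^j(\vec\ell,\langle\vec x\rangle[b_1,\dots,b_j]_i)\to f_i^{j+1}(\vec\ell,\langle\vec x\rangle[b_1,\dots,b_j,\xi_\top(a_{j+1})]_i)$, $(5)$ for $1\le j\le k$ and $v\in\mathrm{AP}(b_j)$ (fresh variables): $f_i^j(\vec\ell,\langle\vec x\rangle[b_1,\dots,b_{j-1},v]_i)\to f(\vec\ell,\langle\vec x\rangle[\bot]_i)$; and for any $k$: $(6)$ for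 $1\le j\le n$ and $v\in\mathrm{AP}(\ell_j)$ (fresh variables): $f(\langle\vec y\rangle[v]_j,\langle\vec x\rangle[\top]_i)\to f(\langle\vec y\rangle[v]_j,\langle\vec x\rangle[\bot]_i)$. The cost of a $(\Xi(\mathcal R),\mu)$-reduction is the number of steps using rules of type (1) or (3). The map $\zeta\colon\mathcal T(\mathcal G,\mathcal V)\to\mathcal T(\mathcal H,\mathcal V)$: identity on variables, homomorphic on constructors, $\zeta(f_R(t_1,\dots,t_n))=f(\zeta(t_1),\dots,\zeta(t_n),c_1,\dots,c_{m_f})$ with $c_i=\top$ iff $\rho^f_i\in R$, else $\bot$. *)

theory Defs
  imports Main
begin

datatype ('f, 'v) trm = Var 'v | Fun 'f "('f, 'v) trm list"

fun vars :: "('f, 'v) trm \<Rightarrow> 'v set" where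
  "vars (Var x) = {x}"
| "vars (Fun f ts) = (\<Union>t \<in> set ts. vars t)"

fun subst :: "('v \<Rightarrow> ('g, 'w) trm) \<Rightarrow> ('g, 'v) trm \<Rightarrow> ('g, 'w) trm" where
  "subst \<sigma> (Var x) = \<sigma> x"
| "subst \<sigma> (Fun f ts) = Fun f (map (subst \<sigma>) ts)"

fun linear :: "('f, 'v) trm \<Rightarrow> bool" where
  "linear (Var x) = True"
| "linear (Fun f ts) = (list_all linear ts \<and>
     (\<forall>i < length ts. \<forall>j < length ts. i \<noteq> j \<longrightarrow> vars (ts ! i) \<inter> vars (ts ! j) = {}))"

fun root :: "('f, 'v) trm \<Rightarrow> 'f option" where
  "root (Var x) = None"
| "root (Fun f ts) = Some f"

definition unifiable :: "('f, 'v) trm \<Rightarrow> ('f, 'v) trm \<Rightarrow> bool" where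
  "unifiable s t \<longleftrightarrow> (\<exists>\<sigma> :: 'v \<Rightarrow> ('f, 'v) trm. subst \<sigma> s = subst \<sigma> t)"

text \<open>Well-formedness w.r.t. an arity function (the signature F is the whole type 'f).\<close>
fun wf_trm :: "('f \<Rightarrow> nat) \<Rightarrow> ('f, 'v) trm \<Rightarrow> bool" where
  "wf_trm ar (Var x) = True"
| "wf_trm ar (Fun f ts) = (length ts = ar f \<and> list_all (wf_trm ar) ts)"

text \<open>A conditional rule  l \<rightarrow> r \<Leftarrow> a1 \<approx> b1, ..., ak \<approx> bk  is the triple (l, r, [(a1,b1),...,(ak,bk)]).\<close>
type_synonym ('f, 'v) crule = "('f, 'v) trm \<times> ('f, 'v) trm \<times> (('f, 'v) trm \<times> ('f, 'v) trm) list"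

definition rules_of :: "('f, 'v) crule set \<Rightarrow> 'f \<Rightarrow> ('f, 'v) crule set" where
  "rules_of R f = {\<rho> \<in> R. root (fst \<rho>) = Some f}"

definition defined :: "('f, 'v) crule set \<Rightarrow> 'f \<Rightarrow> bool" where
  "defined R f \<longleftrightarrow> (\<exists>\<rho> \<in> R. root (fst \<rho>) = Some f)"

fun is_ctr_trm :: "('f, 'v) crule set \<Rightarrow> ('f, 'v) trm \<Rightarrow> bool" where
  "is_ctr_trm R (Var x) = True"
| "is_ctr_trm R (Fun f ts) = (\<not> defined R f \<and> list_all (is_ctr_trm R) ts)"

definition cc_rule :: "('f \<Rightarrow> nat) \<Rightarrow> ('f, 'v) crule set \<Rightarrow> ('f, 'v) crule \<Rightarrow> bool" where
  "cc_rule ar R \<rho> \<longleftrightarrow> (case \<rho> of (l, r, cs) \<Rightarrow>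
     (\<exists>f ls. l = Fun f ls \<and> list_all (is_ctr_trm R) ls) \<and>
     list_all (is_ctr_trm R) (map snd cs) \<and>
     wf_trm ar l \<and> wf_trm ar r \<and> list_all (wf_trm ar) (map fst cs) \<and> list_all (wf_trm ar) (map snd cs) \<and>
     (\<forall>i < length cs. vars l \<inter> vars (snd (cs ! i)) = {}) \<and>
     (\<forall>i < length cs. \<forall>j < length cs. i \<noteq> j \<longrightarrow> vars (snd (cs ! i)) \<inter> vars (snd (cs ! j)) = {}) \<and>
     vars r \<subseteq> vars l \<union> (\<Union>i < length cs. vars (snd (cs ! i))) \<and>
     (\<forall>i < length cs. vars (fst (cs ! i)) \<subseteq> vars l \<union> (\<Union>j < i. vars (snd (cs ! j)))))"

definition cctrs :: "('f \<Rightarrow> nat) \<Rightarrow> ('f, 'v) crule set \<Rightarrow> bool" where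
  "cctrs ar R \<longleftrightarrow> (\<forall>\<rho> \<in> R. cc_rule ar R \<rho>)"

text \<open>A strong CCTRS, together with the fixed enumeration en f = [rho^f_1, ..., rho^f_(m_f)] of R|f.\<close>
definition strong_cctrs :: "('f \<Rightarrow> nat) \<Rightarrow> ('f, 'v) crule set \<Rightarrow> ('f \<Rightarrow> ('f, 'v) crule list) \<Rightarrow> bool" where
  "strong_cctrs ar R en \<longleftrightarrow> cctrs ar R \<and>
     (\<forall>f. finite (rules_of R f) \<and> distinct (en f) \<and> set (en f) = rules_of R f) \<and>
     (\<forall>(l, r, cs) \<in> R. linear l \<and> list_all linear (map snd cs))"

definition mf :: "('f \<Rightarrow> ('f, 'v) crule list) \<Rightarrow> 'f \<Rightarrow> nat" where
  "mf en f = length (en f)"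

text \<open>Labeled signature G: constructors LC f and symbols f_R written LD f R.\<close>
datatype ('f, 'v) lsym = LC 'f | LD 'f "('f, 'v) crule set"

type_synonym ('f, 'v) lterm = "(('f, 'v) lsym, 'v) trm"

fun label :: "('f, 'v) crule set \<Rightarrow> ('f, 'v) trm \<Rightarrow> ('f, 'v) lterm" where
  "label R (Var x) = Var x"
| "label R (Fun f ts) = Fun (if defined R f then LD f (rules_of R f) else LC f) (map (label R) ts)"

fun erase_sym :: "('f, 'v) lsym \<Rightarrow> 'f" where
  "erase_sym (LC f) = f"
| "erase_sym (LD f Q) = f"

fun erase :: "('f, 'v) lterm \<Rightarrow> ('f, 'v) trm" where
  "erase (Var x) = Var x"
| "erase (Fun g ts) = Fun (erase_sym g) (map erase ts)"

fun lnf :: "('f, 'v) lterm \<Rightarrow> bool" where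
  "lnf (Var x) = True"
| "lnf (Fun (LC f) ts) = list_all lnf ts"
| "lnf (Fun (LD f Q) ts) = (Q = {} \<and> list_all lnf ts)"

fun wf_lterm :: "('f \<Rightarrow> nat) \<Rightarrow> ('f, 'v) crule set \<Rightarrow> ('f, 'v) lterm \<Rightarrow> bool" where
  "wf_lterm ar R (Var x) = True"
| "wf_lterm ar R (Fun (LC f) ts) = (\<not> defined R f \<and> length ts = ar f \<and> list_all (wf_lterm ar R) ts)"
| "wf_lterm ar R (Fun (LD f Q) ts) = (defined R f \<and> Q \<subseteq> rules_of R f \<and> length ts = ar f \<and> list_all (wf_lterm ar R) ts)"

text \<open>lstep R s t N: s \<rightharpoonup> t by a step of cost N (with chosen witnessing condition reductions);
  lsteps R s t N: s \<rightharpoonup>* t by a complexity-conscious reduction of cost N.\<close>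
inductive lstep :: "('f, 'v) crule set \<Rightarrow> ('f, 'v) lterm \<Rightarrow> ('f, 'v) lterm \<Rightarrow> nat \<Rightarrow> bool"
  and lsteps :: "('f, 'v) crule set \<Rightarrow> ('f, 'v) lterm \<Rightarrow> ('f, 'v) lterm \<Rightarrow> nat \<Rightarrow> bool"
  for R :: "('f, 'v) crule set" where
  bot_step:
  "\<lbrakk> \<rho> = (l, r, cs); \<rho> \<in> Q; length us = length ss;
     list_all lnf us; linear (Fun (LD f Q) us);
     (\<Union>u \<in> set us. vars u) \<inter> vars l = {};
     Fun (LD f Q) ss = subst \<sigma> (Fun (LD f Q) us);
     \<not> unifiable (Fun f (map erase us)) l \<rbrakk>
   \<Longrightarrow> lstep R (Fun (LD f Q) ss) (Fun (LD f (Q - {\<rho>})) ss) 0"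
| succ_step:
  "\<lbrakk> \<rho> = (Fun f ls, r, cs); \<rho> \<in> Q; length ns = length cs;
     \<forall>i < length cs. lsteps R (subst \<sigma> (label R (fst (cs ! i)))) (subst \<sigma> (label R (snd (cs ! i)))) (ns ! i) \<rbrakk>
   \<Longrightarrow> lstep R (Fun (LD f Q) (map (\<lambda>l. subst \<sigma> (label R l)) ls)) (subst \<sigma> (label R r)) (Suc (sum_list ns))"
| fail_step:
  "\<lbrakk> \<rho> = (Fun f ls, r, cs); \<rho> \<in> Q; j < length cs; length ns = j;
     \<forall>i < j. lsteps R (subst \<sigma> (label R (fst (cs ! i)))) (subst \<sigma> (label R (snd (cs ! i)))) (ns ! i);
     lsteps R (subst \<sigma> (label R (fst (cs ! j)))) (subst \<tau> u) m;
     lnf u; linear u; vars u \<inter> vars (snd (cs ! j)) = {};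
     \<not> unifiable (erase u) (snd (cs ! j)) \<rbrakk>
   \<Longrightarrow> lstep R (Fun (LD f Q) (map (\<lambda>l. subst \<sigma> (label R l)) ls))
               (Fun (LD f (Q - {\<rho>})) (map (\<lambda>l. subst \<sigma> (label R l)) ls)) (sum_list ns + m)"
| ctxt_step:
  "\<lbrakk> i < length ts; lstep R (ts ! i) u n \<rbrakk> \<Longrightarrow> lstep R (Fun g ts) (Fun g (ts[i := u])) n"
| steps_refl: "lsteps R s s 0"
| steps_step: "\<lbrakk> lstep R s t n; lsteps R t u m \<rbrakk> \<Longrightarrow> lsteps R s u (n + m)"

text \<open>The relation \<rightharpoonup>_\<rhd> (descending into a condition).\<close>
inductive lcond :: "('f, 'v) crule set \<Rightarrow> ('f, 'v) lterm \<Rightarrow> ('f, 'v) lterm \<Rightarrow> bool"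
  for R :: "('f, 'v) crule set" where
  root_cond:
  "\<lbrakk> \<rho> = (Fun f ls, r, cs); \<rho> \<in> Q; j < length cs;
     \<forall>i < j. \<exists>n. lsteps R (subst \<sigma> (label R (fst (cs ! i)))) (subst \<sigma> (label R (snd (cs ! i)))) n \<rbrakk>
   \<Longrightarrow> lcond R (Fun (LD f Q) (map (\<lambda>l. subst \<sigma> (label R l)) ls)) (subst \<sigma> (label R (fst (cs ! j))))"
| ctxt_cond:
  "\<lbrakk> i < length ts; lcond R (ts ! i) t \<rbrakk> \<Longrightarrow> lcond R (Fun g ts) t"

definition linf :: "('f, 'v) crule set \<Rightarrow> ('f, 'v) lterm \<Rightarrow> bool" where
  "linf R s \<longleftrightarrow> (\<exists>S. S 0 = s \<and> (\<forall>i. (\<exists>n. lstep R (S i) (S (Suc i)) n) \<or> lcond R (S i) (S (Suc i))))"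

text \<open>Rules carry a cost (1 for rules of type (1)/(3), 0 otherwise); replacement map positions are 1-based.\<close>
inductive cstep :: "(('g, 'v) trm \<times> ('g, 'v) trm \<times> nat) set \<Rightarrow> ('g \<Rightarrow> nat set) \<Rightarrow> ('g, 'v) trm \<Rightarrow> ('g, 'v) trm \<Rightarrow> nat \<Rightarrow> bool"
  for S :: "(('g, 'v) trm \<times> ('g, 'v) trm \<times> nat) set" and \<mu> :: "'g \<Rightarrow> nat set" where
  root_cstep: "(l, r, c) \<in> S \<Longrightarrow> cstep S \<mu> (subst \<sigma> l) (subst \<sigma> r) c"
| ctxt_cstep: "\<lbrakk> i < length ts; Suc i \<in> \<mu> g; cstep S \<mu> (ts ! i) u c \<rbrakk> \<Longrightarrow> cstep S \<mu> (Fun g ts) (Fun g (ts[i := u])) c"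

inductive csteps :: "(('g, 'v) trm \<times> ('g, 'v) trm \<times> nat) set \<Rightarrow> ('g \<Rightarrow> nat set) \<Rightarrow> ('g, 'v) trm \<Rightarrow> ('g, 'v) trm \<Rightarrow> nat \<Rightarrow> bool"
  for S :: "(('g, 'v) trm \<times> ('g, 'v) trm \<times> nat) set" and \<mu> :: "'g \<Rightarrow> nat set" where
  csteps_refl: "csteps S \<mu> s s 0"
| csteps_step: "\<lbrakk> cstep S \<mu> s t c; csteps S \<mu> t u n \<rbrakk> \<Longrightarrow> csteps S \<mu> s u (c + n)"

text \<open>Signature H: HBot, HTop, HF f (f with m_f extra arguments), HC f i j (the symbol f_i^j).\<close>
datatype 'f hsym = HBot | HTop | HF 'f | HC 'f nat nat

type_synonym ('f, 'v) hterm = "('f hsym, 'v) trm"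

fun mu :: "('f \<Rightarrow> nat) \<Rightarrow> 'f hsym \<Rightarrow> nat set" where
  "mu ar HBot = {}"
| "mu ar HTop = {}"
| "mu ar (HF f) = {1 .. ar f}"
| "mu ar (HC f i j) = {ar f + i + j - 1}"

abbreviation hbot :: "('f, 'v) hterm" where "hbot \<equiv> Fun HBot []"
abbreviation htop :: "('f, 'v) hterm" where "htop \<equiv> Fun HTop []"

fun xi :: "('f \<Rightarrow> ('f, 'v) crule list) \<Rightarrow> ('f, 'v) hterm \<Rightarrow> ('f, 'v) trm \<Rightarrow> ('f, 'v) hterm" where
  "xi en st (Var x) = Var x"
| "xi en st (Fun f ts) = Fun (HF f) (map (xi en st) ts @ replicate (mf en f) st)"

text \<open>1-based list insertion: ins xs i ws = <xs>[ws]_i.\<close>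
definition ins :: "'a list \<Rightarrow> nat \<Rightarrow> 'a list \<Rightarrow> 'a list" where
  "ins xs i ws = take (i - 1) xs @ ws @ drop i xs"

text \<open>Anti-patterns AP(t) of a linear constructor term t (variables arbitrary but distinct).\<close>
inductive AP :: "('f \<Rightarrow> nat) \<Rightarrow> ('f, 'v) crule set \<Rightarrow> ('f \<Rightarrow> ('f, 'v) crule list) \<Rightarrow> ('f, 'v) trm \<Rightarrow> ('f, 'v) hterm \<Rightarrow> bool"
  for ar R en where
  AP_ctr: "\<lbrakk> \<not> defined R g; g \<noteq> f; length xs = ar g; distinct xs \<rbrakk>
     \<Longrightarrow> AP ar R en (Fun f ts) (Fun (HF g) (map Var xs))"
| AP_def: "\<lbrakk> defined R g; length xs = ar g; distinct xs \<rbrakk>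
     \<Longrightarrow> AP ar R en (Fun f ts) (Fun (HF g) (map Var xs @ replicate (mf en g) hbot))"
| AP_arg: "\<lbrakk> i < length ts; AP ar R en (ts ! i) u; length xs = length ts;
     linear (Fun (HF f) ((map Var xs)[i := u])) \<rbrakk>
     \<Longrightarrow> AP ar R en (Fun f ts) (Fun (HF f) ((map Var xs)[i := u]))"

text \<open>The rules of \<Xi>(R), as triples (lhs, rhs, cost); cost 1 exactly for rule types (1) and (3).
  "Fresh distinct variables" is expressed by linearity of the left-hand side.\<close>
inductive_set Xi :: "('f \<Rightarrow> nat) \<Rightarrow> ('f, 'v) crule set \<Rightarrow> ('f \<Rightarrow> ('f, 'v) crule list) \<Rightarrow> (('f, 'v) hterm \<times> ('f, 'v) hterm \<times> nat) set"
  for ar R en where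
  Xi1: "\<lbrakk> 1 \<le> i; i \<le> mf en f; en f ! (i - 1) = (Fun f ls, r, []);
          length xs = mf en f;
          lhs = Fun (HF f) (map (xi en htop) ls @ ins (map Var xs) i [htop]); linear lhs \<rbrakk>
        \<Longrightarrow> (lhs, xi en htop r, 1) \<in> Xi ar R en"
| Xi2: "\<lbrakk> 1 \<le> i; i \<le> mf en f; en f ! (i - 1) = (Fun f ls, r, cs); cs \<noteq> [];
          length xs = mf en f;
          lhs = Fun (HF f) (map (xi en htop) ls @ ins (map Var xs) i [htop]); linear lhs \<rbrakk>
        \<Longrightarrow> (lhs, Fun (HC f i 1) (map (xi en htop) ls @ ins (map Var xs) i [xi en htop (fst (cs ! 0))]), 0) \<in> Xi ar R en"
| Xi3: "\<lbrakk> 1 \<le> i; i \<le> mf en f; en f ! (i - 1) = (Fun f ls, r, cs); cs \<noteq> [];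
          length xs = mf en f;
          lhs = Fun (HC f i (length cs)) (map (xi en htop) ls @ ins (map Var xs) i (map (xi en htop \<circ> snd) cs));
          linear lhs \<rbrakk>
        \<Longrightarrow> (lhs, xi en htop r, 1) \<in> Xi ar R en"
| Xi4: "\<lbrakk> 1 \<le> i; i \<le> mf en f; en f ! (i - 1) = (Fun f ls, r, cs); 1 \<le> j; j < length cs;
          length xs = mf en f;
          lhs = Fun (HC f i j) (map (xi en htop) ls @ ins (map Var xs) i (map (xi en htop \<circ> snd) (take j cs)));
          linear lhs \<rbrakk>
        \<Longrightarrow> (lhs, Fun (HC f i (Suc j)) (map (xi en htop) ls @
               ins (map Var xs) i (map (xi en htop \<circ> snd) (take j cs) @ [xi en htop (fst (cs ! j))])), 0) \<in> Xi ar R en"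
| Xi5: "\<lbrakk> 1 \<le> i; i \<le> mf en f; en f ! (i - 1) = (Fun f ls, r, cs); 1 \<le> j; j \<le> length cs;
          AP ar R en (snd (cs ! (j - 1))) v;
          length xs = mf en f;
          lhs = Fun (HC f i j) (map (xi en htop) ls @ ins (map Var xs) i (map (xi en htop \<circ> snd) (take (j - 1) cs) @ [v]));
          linear lhs \<rbrakk>
        \<Longrightarrow> (lhs, Fun (HF f) (map (xi en htop) ls @ ins (map Var xs) i [hbot]), 0) \<in> Xi ar R en"
| Xi6: "\<lbrakk> 1 \<le> i; i \<le> mf en f; en f ! (i - 1) = (Fun f ls, r, cs); 1 \<le> j; j \<le> length ls;
          AP ar R en (ls ! (j - 1)) v;
          length xs = mf en f; length ys = length ls;
          lhs = Fun (HF f) (ins (map Var ys) j [v] @ ins (map Var xs) i [htop]);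
          linear lhs \<rbrakk>
        \<Longrightarrow> (lhs, Fun (HF f) (ins (map Var ys) j [v] @ ins (map Var xs) i [hbot]), 0) \<in> Xi ar R en"

fun zeta :: "('f \<Rightarrow> ('f, 'v) crule list) \<Rightarrow> ('f, 'v) lterm \<Rightarrow> ('f, 'v) hterm" where
  "zeta en (Var x) = Var x"
| "zeta en (Fun (LC f) ts) = Fun (HF f) (map (zeta en) ts)"
| "zeta en (Fun (LD f Q) ts) = Fun (HF f) (map (zeta en) ts @ map (\<lambda>\<rho>. if \<rho> \<in> Q then htop else hbot) (en f))"

end

theory Submission
  imports Defs
begin

fun varlist :: "('f,'v) trm \<Rightarrow> 'v list" where
  "varlist (Var x) = [x]"
| "varlist (Fun f ts) = concat (map varlist ts)"

lemma set_varlist[simp]: "set (varlist t) = vars t"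
  by (induction t) auto

lemma X: "(\<forall>i<length (xs#xss). \<forall>j<length (xs#xss). i \<noteq> j \<longrightarrow> set ((xs#xss)!i) \<inter> set ((xs#xss)!j) = {})
     \<longleftrightarrow> (\<forall>j<length xss. set xs \<inter> set (xss!j) = {}) \<and>
         (\<forall>i<length xss. \<forall>j<length xss. i \<noteq> j \<longrightarrow> set (xss!i) \<inter> set (xss!j) = {})" (is "?L \<longleftrightarrow> ?A \<and> ?B")
proof
  assume L: ?L
  have "?A"
  proof (intro allI impI)
    fix j assume "j < length xss" then show "set xs \<inter> set (xss!j) = {}" using L[rule_format, of 0 "Suc j"] by simp
  qed
  moreover have "?B"
  proof (intro allI impI)
    fix i j assume "i < length xss" "j < length xss" "i \<noteq> j" then show "set (xss!i) \<inter> set (xss!j) = {}" using L[rule_format, of "Suc i" "Suc j"] by simp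
  qed
  ultimately show "?A \<and> ?B" ..
next
  assume AB: "?A \<and> ?B"
  show ?L
  proof (intro allI impI)
    fix i j assume ij: "i < length (xs#xss)" "j < length (xs#xss)" "i \<noteq> j"
    show "set ((xs#xss)!i) \<inter> set ((xs#xss)!j) = {}"
    proof (cases i)
      case 0 then obtain j' where "j = Suc j'" using ij by (cases j) auto
      then show ?thesis using AB ij 0 by auto
    next
      case (Suc i') show ?thesis
      proof (cases j)
        case 0 then show ?thesis using AB ij Suc by (auto simp: Int_commute)
      next
        case (Suc j') then show ?thesis using AB ij \<open>i = Suc i'\<close> by auto
      qed
    qed
  qed
qed

lemma Y: "set xs \<inter> \<Union> (set ` set xss) = {} \<longleftrightarrow> (\<forall>j<length xss. set xs \<inter> set (xss!j) = {})"
proof -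
  have "set xs \<inter> \<Union> (set ` set xss) = {} \<longleftrightarrow> (\<forall>ys\<in>set xss. set xs \<inter> set ys = {})" by auto
  also have "\<dots> \<longleftrightarrow> (\<forall>j<length xss. set xs \<inter> set (xss!j) = {})" by (rule all_set_conv_all_nth)
  finally show ?thesis .
qed

lemma distinct_concat_nth:
  "distinct (concat xss) \<longleftrightarrow> (\<forall>xs\<in>set xss. distinct xs) \<and>
     (\<forall>i<length xss. \<forall>j<length xss. i \<noteq> j \<longrightarrow> set (xss!i) \<inter> set (xss!j) = {})"
proof (induction xss)
  case Nil then show ?case by simp
next
  case (Cons xs xss)
  have "distinct (concat (xs#xss)) \<longleftrightarrow> distinct xs \<and> distinct (concat xss) \<and> set xs \<inter> \<Union> (set ` set xss) = {}"
    by simp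
  then show ?case unfolding Cons.IH X Y by auto
qed

lemma linear_varlist: "linear t \<longleftrightarrow> distinct (varlist t)"
proof (induction t)
  case (Var x) then show ?case by simp
next
  case (Fun f ts)
  have 1: "list_all linear ts \<longleftrightarrow> (\<forall>xs\<in>set (map varlist ts). distinct xs)"
    using Fun.IH by (auto simp: list_all_iff)
  have 2: "(\<forall>i<length (map varlist ts). \<forall>j<length (map varlist ts). i \<noteq> j \<longrightarrow> set (map varlist ts!i) \<inter> set (map varlist ts!j) = {})
     \<longleftrightarrow> (\<forall>i < length ts. \<forall>j < length ts. i \<noteq> j \<longrightarrow> vars (ts ! i) \<inter> vars (ts ! j) = {})"
    by simp
  show ?case unfolding linear.simps varlist.simps distinct_concat_nth 1 2 ..
qed

lemma subst_cong: "(\<And>x. x \<in> vars t \<Longrightarrow> \<sigma> x = \<tau> x) \<Longrightarrow> subst \<sigma> t = subst \<tau> t"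
  by (induction t) auto

lemma vars_erase[simp]: "vars (erase u) = vars u"
  by (induction u) auto

lemma fresh_list:
  assumes "infinite (UNIV::'v set)" "finite A"
  shows "\<exists>xs::'v list. length xs = n \<and> distinct xs \<and> set xs \<inter> A = {}"
proof (induction n)
  case 0 show ?case by simp
next
  case (Suc n) then obtain xs where xs: "length xs = n" "distinct xs" "set xs \<inter> A = {}" by blast
  have "finite (A \<union> set xs)" using assms by simp
  then obtain x where "x \<notin> A \<union> set xs" using assms(1) ex_new_if_finite by metis
  then show ?case using xs by (intro exI[of _ "x#xs"]) auto
qed

lemma subst_of_list:
  assumes "distinct xs" "length xs = length vs"
  shows "\<exists>\<theta>. \<forall>k<length xs. \<theta> (xs!k) = vs!k"
proof -
  define \<theta> where "\<theta> x = the (map_of (zip xs vs) x)" for x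
  have "\<forall>k<length xs. \<theta> (xs!k) = vs!k" using assms by (auto simp: \<theta>_def map_of_zip_nth)
  then show ?thesis by blast
qed

lemma map_subst_Var: "(\<forall>k<length xs. \<theta> (xs!k) = vs!k) \<Longrightarrow> length xs = length vs \<Longrightarrow> map (subst \<theta>) (map Var xs) = vs"
  by (auto intro: nth_equalityI)

lemma length_ins: "1 \<le> i \<Longrightarrow> i \<le> length xs \<Longrightarrow> length (ins xs i ws) = length xs - 1 + length ws"
  unfolding ins_def by auto

lemma map_ins: "map f (ins xs i ws) = ins (map f xs) i (map f ws)"
  unfolding ins_def by (simp add: take_map drop_map)

lemma ins_upd: "1 \<le> i \<Longrightarrow> i \<le> length xs \<Longrightarrow> ins xs i [y] = xs[i-1 := y]"
  unfolding ins_def by (simp add: upd_conv_take_nth_drop)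

lemma ins_nth: "1 \<le> i \<Longrightarrow> i \<le> length xs \<Longrightarrow> ins xs i [xs!(i-1)] = xs"
  by (simp add: ins_upd)

lemma ins_decomp: "1 \<le> i \<Longrightarrow> i \<le> length F \<Longrightarrow> length ws = k \<Longrightarrow>
   P @ ins F i (ws @ [t]) = (P @ take (i-1) F @ ws) @ t # drop i F \<and> length (P @ take (i-1) F @ ws) = length P + (i-1) + k"
  unfolding ins_def by simp

lemma ins_nth_pos: "1 \<le> i \<Longrightarrow> i \<le> length F \<Longrightarrow> length ws = k \<Longrightarrow>
   (P @ ins F i (ws @ [t])) ! (length P + (i-1) + k) = t"
  using ins_decomp[of i F ws k P t] by (metis nth_append_length)

lemma ins_upd_pos: "1 \<le> i \<Longrightarrow> i \<le> length F \<Longrightarrow> length ws = k \<Longrightarrow>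
   (P @ ins F i (ws @ [t]))[length P + (i-1) + k := t'] = P @ ins F i (ws @ [t'])"
  using ins_decomp[of i F ws k P t] ins_decomp[of i F ws k P t'] by (metis list_update_length)

lemma length_ins_pos: "1 \<le> i \<Longrightarrow> i \<le> length F \<Longrightarrow> length ws = k \<Longrightarrow>
   length P + (i-1) + k < length (P @ ins F i (ws @ [t]))"
  unfolding ins_def by simp

lemma concat_singletons[simp]: "concat (map (\<lambda>x. [x]) xs) = xs"
  by (induction xs) auto

lemma varlist_ins: "concat (map varlist (ins (map Var zs) i ws)) = take (i-1) zs @ concat (map varlist ws) @ drop i zs"
  unfolding ins_def by (simp add: take_map drop_map o_def)

lemma csteps_trans: "csteps S \<mu> s t n \<Longrightarrow> csteps S \<mu> t u m \<Longrightarrow> csteps S \<mu> s u (n+m)"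
  by (induction rule: csteps.induct) (auto intro: csteps.intros simp: add.assoc)

lemma cstep_csteps: "cstep S \<mu> s t c \<Longrightarrow> csteps S \<mu> s t c"
  using csteps_step[OF _ csteps_refl] by fastforce

definition cplus where
  "cplus S \<mu> s t n \<longleftrightarrow> (\<exists>u c m. cstep S \<mu> s u c \<and> csteps S \<mu> u t m \<and> n = c + m)"

lemma cplus_csteps: "cplus S \<mu> s t n \<Longrightarrow> csteps S \<mu> s t n"
  unfolding cplus_def by (auto intro: csteps.intros)

lemma cstep_cplus: "cstep S \<mu> s t c \<Longrightarrow> cplus S \<mu> s t c"
  unfolding cplus_def by (intro exI[of _ t] exI[of _ c] exI[of _ 0]) (auto intro: csteps.intros)

lemma cplus_csteps_trans: "cplus S \<mu> s t n \<Longrightarrow> csteps S \<mu> t u m \<Longrightarrow> cplus S \<mu> s u (n+m)"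
proof -
  assume a: "cplus S \<mu> s t n" "csteps S \<mu> t u m"
  then obtain v c k where "cstep S \<mu> s v c" "csteps S \<mu> v t k" "n = c + k" unfolding cplus_def by blast
  moreover have "csteps S \<mu> v u (k + m)" using csteps_trans[OF \<open>csteps S \<mu> v t k\<close> a(2)] .
  ultimately show ?thesis unfolding cplus_def by (intro exI[of _ v] exI[of _ c] exI[of _ "k+m"]) simp
qed

lemma csteps_cplus_trans: "csteps S \<mu> s t n \<Longrightarrow> cplus S \<mu> t u m \<Longrightarrow> cplus S \<mu> s u (n+m)"
proof (induction rule: csteps.induct)
  case (csteps_refl s) then show ?case by simp
next
  case (csteps_step s t c u' n)
  then have "csteps S \<mu> t u (n + m)" using cplus_csteps csteps_trans by blast
  then show ?case using csteps_step(1) unfolding cplus_def by (auto simp: add.assoc)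
qed

lemma csteps_ctxt_gen:
  assumes "csteps S \<mu> s u c" "i < length ts" "Suc i \<in> \<mu> g"
  shows "csteps S \<mu> (Fun g (ts[i:=s])) (Fun g (ts[i:=u])) c"
  using assms(1)
proof (induction rule: csteps.induct)
  case (csteps_refl s) then show ?case by (rule csteps.csteps_refl)
next
  case (csteps_step s t c u n)
  have "cstep S \<mu> (Fun g (ts[i:=s])) (Fun g ((ts[i:=s])[i:=t])) c"
    by (rule ctxt_cstep) (use assms csteps_step in auto)
  then show ?case using csteps_step by (auto intro: csteps.intros)
qed

lemma csteps_ctxt:
  assumes "csteps S \<mu> (ts!i) u c" "i < length ts" "Suc i \<in> \<mu> g"
  shows "csteps S \<mu> (Fun g ts) (Fun g (ts[i:=u])) c"
  using csteps_ctxt_gen[OF assms] assms(2) by simp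

lemma cplus_ctxt:
  assumes "cplus S \<mu> (ts!i) u c" "i < length ts" "Suc i \<in> \<mu> g"
  shows "cplus S \<mu> (Fun g ts) (Fun g (ts[i:=u])) c"
proof -
  obtain v c1 m where v: "cstep S \<mu> (ts!i) v c1" "csteps S \<mu> v u m" "c = c1 + m"
    using assms(1) unfolding cplus_def by blast
  have "cstep S \<mu> (Fun g ts) (Fun g (ts[i:=v])) c1" by (rule ctxt_cstep) (use assms v in auto)
  moreover have "csteps S \<mu> (Fun g (ts[i:=v])) (Fun g ((ts[i:=v])[i:=u])) m"
    using csteps_ctxt_gen[OF v(2), of i "ts[i:=v]" g] assms by simp
  ultimately show ?thesis using v(3) unfolding cplus_def by auto
qed

inductive actsub :: "('g \<Rightarrow> nat set) \<Rightarrow> ('g,'v) trm \<Rightarrow> ('g,'v) trm \<Rightarrow> bool" for \<mu> where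
  as_refl: "actsub \<mu> t t"
| as_arg: "i < length ts \<Longrightarrow> Suc i \<in> \<mu> g \<Longrightarrow> actsub \<mu> (ts!i) t \<Longrightarrow> actsub \<mu> (Fun g ts) t"

lemma actsub_trans: "actsub \<mu> T t \<Longrightarrow> actsub \<mu> t u \<Longrightarrow> actsub \<mu> T u"
  by (induction rule: actsub.induct) (auto intro: actsub.intros)

lemma actsub_cstep: "actsub \<mu> T t \<Longrightarrow> cstep S \<mu> t t' c \<Longrightarrow> \<exists>T'. cstep S \<mu> T T' c \<and> actsub \<mu> T' t'"
proof (induction rule: actsub.induct)
  case (as_refl t) then show ?case by (auto intro: actsub.intros)
next
  case (as_arg i ts g t)
  then obtain T' where T': "cstep S \<mu> (ts!i) T' c" "actsub \<mu> T' t'" by blast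
  have "cstep S \<mu> (Fun g ts) (Fun g (ts[i:=T'])) c" using as_arg T' by (auto intro: ctxt_cstep)
  moreover have "actsub \<mu> (Fun g (ts[i:=T'])) t'" using as_arg T' by (auto intro!: actsub.as_arg[of i])
  ultimately show ?case by blast
qed

lemma actsub_csteps: "csteps S \<mu> t t' c \<Longrightarrow> actsub \<mu> T t \<Longrightarrow> \<exists>T'. csteps S \<mu> T T' c \<and> actsub \<mu> T' t'"
proof (induction arbitrary: T rule: csteps.induct)
  case (csteps_refl s) then show ?case by (auto intro: csteps.intros)
next
  case (csteps_step s t c u n)
  obtain T1 where T1: "cstep S \<mu> T T1 c" "actsub \<mu> T1 t" using actsub_cstep csteps_step by blast
  obtain T2 where T2: "csteps S \<mu> T1 T2 n" "actsub \<mu> T2 u" using csteps_step.IH[OF T1(2)] by blast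
  show ?case using csteps.csteps_step[OF T1(1) T2(1)] T2(2) by blast
qed

lemma actsub_cplus: "cplus S \<mu> t t' c \<Longrightarrow> actsub \<mu> T t \<Longrightarrow> \<exists>T'. cplus S \<mu> T T' c \<and> actsub \<mu> T' t'"
proof -
  assume a: "cplus S \<mu> t t' c" "actsub \<mu> T t"
  then obtain v c1 k where v: "cstep S \<mu> t v c1" "csteps S \<mu> v t' k" "c = c1 + k" unfolding cplus_def by blast
  obtain T1 where T1: "cstep S \<mu> T T1 c1" "actsub \<mu> T1 v" using actsub_cstep[OF a(2) v(1)] by blast
  obtain T2 where T2: "csteps S \<mu> T1 T2 k" "actsub \<mu> T2 t'" using actsub_csteps[OF v(2) T1(2)] by blast
  show ?thesis unfolding cplus_def using T1 T2 v(3) by blast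
qed

lemma strong_en:
  assumes "strong_cctrs ar R en"
  shows "set (en f) = rules_of R f" "distinct (en f)" "\<not> defined R f \<Longrightarrow> en f = []"
proof -
  show "set (en f) = rules_of R f" "distinct (en f)" using assms unfolding strong_cctrs_def by auto
  moreover have "\<not> defined R f \<Longrightarrow> rules_of R f = {}" unfolding defined_def rules_of_def by auto
  ultimately show "\<not> defined R f \<Longrightarrow> en f = []" by auto
qed

lemma strong_rule:
  assumes "strong_cctrs ar R en" "(l, r, cs) \<in> R"
  shows "cc_rule ar R (l, r, cs)" "linear l" "list_all linear (map snd cs)"
  using assms unfolding strong_cctrs_def cctrs_def by auto

lemma map_const_on: "(\<And>x. x \<in> set xs \<Longrightarrow> f x = c) \<Longrightarrow> map f xs = replicate (length xs) c"
  by (induction xs) auto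

lemma zeta_label:
  assumes "strong_cctrs ar R en"
  shows "zeta en (subst \<sigma> (label R t)) = subst (zeta en \<circ> \<sigma>) (xi en htop t)"
proof (induction t)
  case (Var x) then show ?case by simp
next
  case (Fun f ts)
  show ?case
  proof (cases "defined R f")
    case True
    have "map (\<lambda>\<rho>. if \<rho> \<in> rules_of R f then htop else hbot) (en f) = replicate (mf en f) htop"
      unfolding mf_def by (rule map_const_on) (use strong_en[OF assms] in auto)
    then show ?thesis using True Fun by (simp add: o_def)
  next
    case False
    then have "en f = []" using strong_en[OF assms] by auto
    then show ?thesis using False Fun by (simp add: o_def mf_def)
  qed
qed

lemma vars_xi[simp]: "vars (xi en (Fun c []) t) = vars t"
  by (induction t) auto

lemma varlist_xi: "varlist (xi en (Fun c []) t) = varlist t"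
proof (induction t)
  case (Fun f ts)
  have eq: "map (\<lambda>x. varlist (xi en (Fun c []) x)) ts = map varlist ts" using Fun by (simp add: map_eq_conv)
  show ?case using eq by (simp add: o_def del: map_eq_conv)
qed simp

lemma linear_xi: "linear (xi en (Fun c []) t) \<longleftrightarrow> linear t"
  by (simp add: linear_varlist varlist_xi)

lemma wf_lterm_args: "wf_lterm ar R (Fun g ts) \<Longrightarrow> list_all (wf_lterm ar R) ts \<and> length ts = ar (erase_sym g)"
  by (cases g) auto

lemma wf_lterm_nth: "wf_lterm ar R (Fun g ts) \<Longrightarrow> i < length ts \<Longrightarrow> wf_lterm ar R (ts!i)"
  using wf_lterm_args by (fastforce simp: list_all_length)

lemma wf_lterm_upd: "wf_lterm ar R (Fun g ts) \<Longrightarrow> i < length ts \<Longrightarrow> wf_lterm ar R u \<Longrightarrow> wf_lterm ar R (Fun g (ts[i:=u]))"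
  by (cases g) (auto simp: list_all_length nth_list_update)

lemma wf_subst_label:
  "wf_trm ar t \<Longrightarrow> (\<forall>x\<in>vars t. wf_lterm ar R (\<sigma> x)) \<Longrightarrow> wf_lterm ar R (subst \<sigma> (label R t))"
proof (induction t)
  case (Var x) then show ?case by simp
next
  case (Fun f ts) then show ?case by (auto simp: list_all_iff rules_of_def defined_def)
qed

lemma wf_subst_vars: "wf_lterm ar R (subst \<sigma> t) \<Longrightarrow> x \<in> vars t \<Longrightarrow> wf_lterm ar R (\<sigma> x)"
proof (induction t)
  case (Var y) then show ?case by simp
next
  case (Fun g ts)
  then obtain t' where t': "t' \<in> set ts" "x \<in> vars t'" by auto
  have "list_all (wf_lterm ar R) (map (subst \<sigma>) ts)" using wf_lterm_args Fun.prems(1) by fastforce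
  then have "wf_lterm ar R (subst \<sigma> t')" using t' by (auto simp: list_all_iff)
  then show ?case using Fun.IH t' by blast
qed

lemma zeta_Fun: "\<exists>fl. zeta en (Fun g ts) = Fun (HF (erase_sym g)) (map (zeta en) ts @ fl) \<and>
    zeta en (Fun g ts') = Fun (HF (erase_sym g)) (map (zeta en) ts' @ fl)"
  by (cases g) auto

lemma zeta_ctxt:
  assumes "wf_lterm ar R (Fun g ts)" "i < length ts" "cplus S (mu ar) (zeta en (ts!i)) (zeta en u) n"
  shows "cplus S (mu ar) (zeta en (Fun g ts)) (zeta en (Fun g (ts[i:=u]))) n"
proof -
  obtain fl where fl: "zeta en (Fun g ts) = Fun (HF (erase_sym g)) (map (zeta en) ts @ fl)"
    "zeta en (Fun g (ts[i:=u])) = Fun (HF (erase_sym g)) (map (zeta en) (ts[i:=u]) @ fl)"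
    using zeta_Fun by blast
  have len: "length ts = ar (erase_sym g)" using wf_lterm_args[OF assms(1)] by simp
  have "cplus S (mu ar) (Fun (HF (erase_sym g)) (map (zeta en) ts @ fl))
     (Fun (HF (erase_sym g)) ((map (zeta en) ts @ fl)[i := zeta en u])) n"
    by (rule cplus_ctxt) (use assms len in \<open>auto simp: nth_append\<close>)
  then show ?thesis using fl assms(2) by (simp add: list_update_append map_update)
qed

lemma zeta_actsub:
  assumes "wf_lterm ar R (Fun g ts)" "i < length ts"
  shows "actsub (mu ar) (zeta en (Fun g ts)) (zeta en (ts!i))"
proof -
  obtain fl where fl: "zeta en (Fun g ts) = Fun (HF (erase_sym g)) (map (zeta en) ts @ fl)"
    using zeta_Fun by blast
  have len: "length ts = ar (erase_sym g)" using wf_lterm_args[OF assms(1)] by simp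
  show ?thesis unfolding fl
    by (rule as_arg[of i]) (use assms len in \<open>auto simp: nth_append intro: as_refl\<close>)
qed

lemma finite_vars: "finite (vars t)"
  using finite_set[of "varlist t"] by simp

lemma subst_Var_id: "subst Var t = t"
  by (induction t) (auto intro: map_idI)

lemma unif_Var1: "x \<notin> vars t \<Longrightarrow> unifiable (Var x) t"
proof -
  assume x: "x \<notin> vars t"
  have "subst (Var(x := t)) t = subst Var t" by (rule subst_cong) (use x in auto)
  then show ?thesis unfolding unifiable_def by (intro exI[of _ "Var(x := t)"]) (simp add: subst_Var_id)
qed

lemma unif_sym: "unifiable s t \<Longrightarrow> unifiable t s"
  unfolding unifiable_def by metis

lemma unif_combine:
  fixes ss ts :: "('f,'v) trm list"
  assumes len: "length ss = length ts" and un: "\<forall>k<length ss. unifiable (ss!k) (ts!k)"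
    and dis: "\<forall>k<length ss. \<forall>m<length ss. k \<noteq> m \<longrightarrow> (vars (ss!k) \<union> vars (ts!k)) \<inter> (vars (ss!m) \<union> vars (ts!m)) = {}"
  shows "unifiable (Fun f ss) (Fun f ts)"
proof -
  have "\<forall>k. \<exists>\<sigma>::'v \<Rightarrow> ('f,'v) trm. k < length ss \<longrightarrow> subst \<sigma> (ss!k) = subst \<sigma> (ts!k)"
  proof
    fix k show "\<exists>\<sigma>::'v \<Rightarrow> ('f,'v) trm. k < length ss \<longrightarrow> subst \<sigma> (ss!k) = subst \<sigma> (ts!k)"
    proof (cases "k < length ss")
      case True
      then have "unifiable (ss!k) (ts!k)" using un by simp
      then obtain \<sigma> :: "'v \<Rightarrow> ('f,'v) trm" where "subst \<sigma> (ss!k) = subst \<sigma> (ts!k)" unfolding unifiable_def by blast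
      then show ?thesis by blast
    qed simp
  qed
  from choice[OF this] obtain \<sigma>s :: "nat \<Rightarrow> 'v \<Rightarrow> ('f,'v) trm" where \<sigma>s: "\<And>k. k < length ss \<Longrightarrow> subst (\<sigma>s k) (ss!k) = subst (\<sigma>s k) (ts!k)" by blast
  define V where "V k = vars (ss!k) \<union> vars (ts!k)" for k
  define \<sigma> :: "'v \<Rightarrow> ('f,'v) trm" where "\<sigma> x = (if \<exists>k<length ss. x \<in> V k then \<sigma>s (SOME k. k < length ss \<and> x \<in> V k) x else Var x)" for x
  have agree: "\<sigma> x = \<sigma>s k x" if "k < length ss" "x \<in> V k" for k x
  proof -
    have "(SOME k. k < length ss \<and> x \<in> V k) = k"
    proof (rule some_equality)
      fix m assume m: "m < length ss \<and> x \<in> V m"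
      show "m = k"
      proof (rule ccontr)
        assume "m \<noteq> k"
        then have "V m \<inter> V k = {}" using dis m that unfolding V_def by simp
        then show False using m that by blast
      qed
    qed (use that in auto)
    then show ?thesis unfolding \<sigma>_def using that by auto
  qed
  have "map (subst \<sigma>) ss = map (subst \<sigma>) ts"
  proof (rule nth_equalityI)
    fix k assume k: "k < length (map (subst \<sigma>) ss)"
    then have k': "k < length ss" by simp
    have "subst \<sigma> (ss!k) = subst (\<sigma>s k) (ss!k)" by (rule subst_cong) (use agree k' in \<open>auto simp: V_def\<close>)
    moreover have "subst \<sigma> (ts!k) = subst (\<sigma>s k) (ts!k)" by (rule subst_cong) (use agree k' in \<open>auto simp: V_def\<close>)
    ultimately show "map (subst \<sigma>) ss ! k = map (subst \<sigma>) ts ! k" using \<sigma>s[OF k'] k' len by simp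
  qed (use len in simp)
  then show ?thesis unfolding unifiable_def by (intro exI[of _ \<sigma>]) simp
qed

lemma distinct_ins_vars:
  assumes "distinct zs" "distinct W" "set W \<inter> set zs = {}" "1 \<le> i"
  shows "distinct (take (i-1) zs @ W @ drop i zs)"
proof -
  have "set (take (i-1) zs) \<inter> set (drop i zs) = {}" using assms by (intro set_take_disj_set_drop_if_distinct) auto
  moreover have "set (take (i-1) zs) \<subseteq> set zs" "set (drop i zs) \<subseteq> set zs" by (auto dest: in_set_takeD in_set_dropD)
  ultimately show ?thesis using assms by auto
qed

lemma vars_upd_subset: "vars (Fun g (ts[k:=v])) \<subseteq> vars (Fun g ts) \<union> vars v"
  using set_update_subset_insert[of ts k v] by auto

lemma linear_Fun_Var_upd:
  assumes "distinct xs" "linear v" "vars v \<inter> set xs = {}" "k < length xs"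
  shows "linear (Fun g ((map Var xs)[k := v]))"
proof -
  have "(map Var xs)[k := v] = ins (map Var xs) (Suc k) [v]" using assms by (simp add: ins_upd)
  then have "varlist (Fun g ((map Var xs)[k := v])) = take k xs @ varlist v @ drop (Suc k) xs"
    using varlist_ins[of xs "Suc k" "[v]"] by simp
  moreover have "distinct (take (Suc k - 1) xs @ varlist v @ drop (Suc k) xs)"
    by (rule distinct_ins_vars) (use assms in \<open>auto simp: linear_varlist\<close>)
  ultimately show ?thesis by (simp add: linear_varlist)
qed

lemma linear_nth: "linear (Fun g ts) \<Longrightarrow> k < length ts \<Longrightarrow> linear (ts!k)"
  by (auto simp: list_all_length)

lemma linear_disj: "linear (Fun g ts) \<Longrightarrow> k < length ts \<Longrightarrow> m < length ts \<Longrightarrow> k \<noteq> m \<Longrightarrow> vars (ts!k) \<inter> vars (ts!m) = {}"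
  by auto

lemma vars_nth_sub: "k < length ts \<Longrightarrow> vars (ts!k) \<subseteq> vars (Fun g ts)"
  using nth_mem by fastforce

lemma AP_exists:
  fixes b :: "('f,'v) trm" and u :: "('f,'v) lterm" and \<tau> :: "'v \<Rightarrow> ('f,'v) lterm"
  assumes inf: "infinite (UNIV::'v set)"
  shows "is_ctr_trm R b \<Longrightarrow> wf_trm ar b \<Longrightarrow> linear b \<Longrightarrow> lnf u \<Longrightarrow> linear u \<Longrightarrow>
    wf_lterm ar R (subst \<tau> u) \<Longrightarrow> vars u \<inter> vars b = {} \<Longrightarrow> \<not> unifiable (erase u) b \<Longrightarrow> finite A \<Longrightarrow>
    \<exists>v \<theta>. AP ar R en b v \<and> zeta en (subst \<tau> u) = subst \<theta> v \<and> vars v \<inter> A = {} \<and> linear v"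
proof (induction b arbitrary: u A)
  case (Var x)
  have "x \<notin> vars (erase u)" using Var.prems(7) by simp
  then have "unifiable (Var x) (erase u)" by (rule unif_Var1)
  then have "unifiable (erase u) (Var x)" by (rule unif_sym)
  then show ?case using Var.prems(8) by blast
next
  case (Fun c bs)
  note prems = Fun.prems
  show ?case
  proof (cases u)
    case (Var y)
    have "unifiable (erase u) (Fun c bs)" using prems(7) Var by (auto intro: unif_Var1)
    then show ?thesis using prems(8) by blast
  next
    case (Fun g us)
    note u = this
    have cnd: "\<not> defined R c" using prems(1) by simp
    show ?thesis
    proof (cases g)
      case (LC g')
      have wfu: "\<not> defined R g'" "length us = ar g'" "list_all (wf_lterm ar R) (map (subst \<tau>) us)"
        using prems(6) u LC by auto
      have zu: "zeta en (subst \<tau> u) = Fun (HF g') (map (\<lambda>t. zeta en (subst \<tau> t)) us)" using u LC by simp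
      show ?thesis
      proof (cases "g' = c")
        case False
        obtain xs :: "'v list" where xs: "length xs = ar g'" "distinct xs" "set xs \<inter> A = {}"
          using fresh_list[OF inf prems(9)] by blast
        obtain \<theta> where \<theta>: "\<forall>k<length xs. \<theta> (xs!k) = map (\<lambda>t. zeta en (subst \<tau> t)) us ! k"
          using subst_of_list[OF xs(2), of "map (\<lambda>t. zeta en (subst \<tau> t)) us"] xs wfu by auto
        have "AP ar R en (Fun c bs) (Fun (HF g') (map Var xs))"
          by (rule AP_ctr) (use wfu False xs in auto)
        moreover have "zeta en (subst \<tau> u) = subst \<theta> (Fun (HF g') (map Var xs))"
          using map_subst_Var[OF \<theta>] xs wfu zu by simp
        moreover have "linear (Fun (HF g') (map Var xs :: ('f,'v) hterm list))"
          using xs by (simp add: linear_varlist o_def)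
        moreover have "vars (Fun (HF g') (map Var xs :: ('f,'v) hterm list)) \<inter> A = {}" using xs by auto
        ultimately show ?thesis by blast
      next
        case True
        have lenb: "length bs = ar c" using prems(2) by simp
        have lenu: "length us = length bs" using wfu True lenb by simp
        have linu: "linear (Fun g us)" using prems(5) u by simp
        have disu: "vars (Fun g us) \<inter> vars (Fun c bs) = {}" using prems(7) u by simp
        have "\<exists>k<length bs. \<not> unifiable (erase (us!k)) (bs!k)"
        proof (rule ccontr)
          assume "\<not> ?thesis"
          then have allu: "\<forall>k<length (map erase us). unifiable (map erase us ! k) (bs!k)" using lenu by auto
          have "unifiable (Fun c (map erase us)) (Fun c bs)"
          proof (rule unif_combine[OF _ allu])
            show "\<forall>k<length (map erase us). \<forall>m<length (map erase us). k \<noteq> m \<longrightarrow>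
               (vars (map erase us ! k) \<union> vars (bs ! k)) \<inter> (vars (map erase us ! m) \<union> vars (bs ! m)) = {}"
            proof (intro allI impI)
              fix k m assume km: "k < length (map erase us)" "m < length (map erase us)" "k \<noteq> m"
              then have km': "k < length us" "m < length us" "k < length bs" "m < length bs" using lenu by auto
              have 1: "vars (us!k) \<inter> vars (us!m) = {}" using linear_disj[OF linu km'(1,2) km(3)] .
              have 2: "vars (bs!k) \<inter> vars (bs!m) = {}" using linear_disj[OF prems(3) km'(3,4) km(3)] .
              have 3: "vars (us!k) \<inter> vars (bs!m) = {}" "vars (us!m) \<inter> vars (bs!k) = {}"
                using disu vars_nth_sub[OF km'(1), of g] vars_nth_sub[OF km'(2), of g]
                  vars_nth_sub[OF km'(3), of c] vars_nth_sub[OF km'(4), of c] by blast+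
              show "(vars (map erase us ! k) \<union> vars (bs ! k)) \<inter> (vars (map erase us ! m) \<union> vars (bs ! m)) = {}"
                using 1 2 3 km' by auto
            qed
          qed (use lenu in simp)
          then show False using prems(8) u LC True by simp
        qed
        then obtain k where k: "k < length bs" "\<not> unifiable (erase (us!k)) (bs!k)" by blast
        have ku: "k < length us" using k lenu by simp
        have "\<exists>v \<theta>. AP ar R en (bs!k) v \<and> zeta en (subst \<tau> (us!k)) = subst \<theta> v \<and> vars v \<inter> A = {} \<and> linear v"
        proof (rule Fun.IH)
          show "bs!k \<in> set bs" using k by simp
          show "is_ctr_trm R (bs!k)" using prems(1) k by (simp add: list_all_length)
          show "wf_trm ar (bs!k)" using prems(2) k by (simp add: list_all_length)
          show "linear (bs!k)" using linear_nth[OF prems(3) k(1)] .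
          show "lnf (us!k)" using prems(4) u LC ku by (simp add: list_all_length)
          show "linear (us!k)" using linear_nth[OF linu ku] .
          show "wf_lterm ar R (subst \<tau> (us!k))" using wfu ku by (simp add: list_all_length)
          show "vars (us!k) \<inter> vars (bs!k) = {}" using disu vars_nth_sub[OF ku, of g] vars_nth_sub[OF k(1), of c] by blast
        qed (use k prems(9) in auto)
        then obtain vk \<theta>k where vk: "AP ar R en (bs!k) vk" "zeta en (subst \<tau> (us!k)) = subst \<theta>k vk"
          "vars vk \<inter> A = {}" "linear vk" by blast
        obtain xs :: "'v list" where xs: "length xs = length bs" "distinct xs" "set xs \<inter> (A \<union> vars vk) = {}"
          using fresh_list[OF inf, of "A \<union> vars vk" "length bs"] prems(9) finite_vars by blast
        obtain \<theta>0 where \<theta>0: "\<forall>k<length xs. \<theta>0 (xs!k) = map (\<lambda>t. zeta en (subst \<tau> t)) us ! k"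
          using subst_of_list[OF xs(2), of "map (\<lambda>t. zeta en (subst \<tau> t)) us"] xs lenu by auto
        define \<theta> where "\<theta> x = (if x \<in> vars vk then \<theta>k x else \<theta>0 x)" for x
        define v where "v = Fun (HF c) ((map Var xs)[k := vk])"
        have "AP ar R en (Fun c bs) v" unfolding v_def
          by (rule AP_arg) (use k vk xs linear_Fun_Var_upd[of xs vk k] in auto)
        moreover have "linear v" unfolding v_def using linear_Fun_Var_upd[of xs vk k] vk xs k by auto
        moreover have "vars v \<inter> A = {}" unfolding v_def using vars_upd_subset[of "HF c" "map Var xs" k vk] vk xs by auto
        moreover have "zeta en (subst \<tau> u) = subst \<theta> v"
        proof -
          have a: "subst \<theta> vk = subst \<theta>k vk" by (rule subst_cong) (simp add: \<theta>_def)
          have "map (subst \<theta>) (map Var xs) = map (subst \<theta>0) (map Var xs)"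
            using xs by (auto simp: \<theta>_def)
          also have "\<dots> = map (\<lambda>t. zeta en (subst \<tau> t)) us"
            by (rule map_subst_Var[OF \<theta>0]) (use xs lenu in simp)
          finally have b2: "map (subst \<theta>) (map Var xs) = map (\<lambda>t. zeta en (subst \<tau> t)) us" .
          have "subst \<theta> v = Fun (HF c) ((map (subst \<theta>) (map Var xs))[k := subst \<theta> vk])"
            unfolding v_def by (simp add: map_update)
          also have "\<dots> = Fun (HF c) ((map (\<lambda>t. zeta en (subst \<tau> t)) us)[k := zeta en (subst \<tau> (us!k))])"
            by (simp only: b2 a vk(2))
          also have "\<dots> = Fun (HF c) (map (\<lambda>t. zeta en (subst \<tau> t)) us)"
            by (metis list_update_id map_update)
          also have "\<dots> = zeta en (subst \<tau> u)" using zu True by simp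
          finally show ?thesis by simp
        qed
        ultimately show ?thesis by blast
      qed
    next
      case (LD g' Q)
      have wfu: "defined R g'" "length us = ar g'" using prems(6) u LD by auto
      have Q: "Q = {}" using prems(4) u LD by simp
      have gc: "g' \<noteq> c" using wfu cnd by auto
      have zu: "zeta en (subst \<tau> u) = Fun (HF g') (map (\<lambda>t. zeta en (subst \<tau> t)) us @ replicate (mf en g') hbot)"
        using u LD Q by (simp add: mf_def map_replicate_const)
      obtain xs :: "'v list" where xs: "length xs = ar g'" "distinct xs" "set xs \<inter> A = {}"
        using fresh_list[OF inf prems(9)] by blast
      obtain \<theta> where \<theta>: "\<forall>k<length xs. \<theta> (xs!k) = map (\<lambda>t. zeta en (subst \<tau> t)) us ! k"
        using subst_of_list[OF xs(2), of "map (\<lambda>t. zeta en (subst \<tau> t)) us"] xs wfu by auto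
      have "AP ar R en (Fun c bs) (Fun (HF g') (map Var xs @ replicate (mf en g') hbot))"
        by (rule AP_def) (use wfu xs in auto)
      moreover have "zeta en (subst \<tau> u) = subst \<theta> (Fun (HF g') (map Var xs @ replicate (mf en g') hbot))"
        using map_subst_Var[OF \<theta>] xs wfu zu by simp
      moreover have "linear (Fun (HF g') (map Var xs @ replicate (mf en g') hbot :: ('f,'v) hterm list))"
        using xs by (simp add: linear_varlist o_def)
      moreover have "vars (Fun (HF g') (map Var xs @ replicate (mf en g') hbot :: ('f,'v) hterm list)) \<inter> A = {}" using xs by auto
      ultimately show ?thesis by blast
    qed
  qed
qed

definition flags :: "('f \<Rightarrow> ('f, 'v) crule list) \<Rightarrow> ('f, 'v) crule set \<Rightarrow> 'f \<Rightarrow> ('f,'v) hterm list" where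
  "flags en Q f = map (\<lambda>\<rho>. if \<rho> \<in> Q then htop else hbot) (en f)"

definition Avars :: "('f,'v) trm list \<Rightarrow> ('f,'v) trm \<Rightarrow> (('f,'v) trm \<times> ('f,'v) trm) list \<Rightarrow> 'v set" where
  "Avars ls r cs = (\<Union>l\<in>set ls. vars l) \<union> vars r \<union> (\<Union>c\<in>set cs. vars (fst c) \<union> vars (snd c))"

lemma finite_Avars: "finite (Avars ls r cs)"
  unfolding Avars_def by (auto simp: finite_vars)

lemma lin_lhs:
  assumes "linear (Fun f ls)" "distinct xs" "distinct W" "set xs \<inter> vars (Fun f ls) = {}"
    "set W \<inter> (set xs \<union> vars (Fun f ls)) = {}" "1 \<le> i" "concat (map varlist ws) = W"
  shows "linear (Fun g (map (xi en (Fun c [])) ls @ ins (map Var xs) i ws))"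
proof -
  have "varlist (Fun g (map (xi en (Fun c [])) ls @ ins (map Var xs) i ws)) = varlist (Fun f ls) @ (take (i-1) xs @ W @ drop i xs)"
    using varlist_ins[of xs i ws] assms(7) by (simp add: varlist_xi o_def)
  moreover have "distinct (take (i-1) xs @ W @ drop i xs)"
    by (rule distinct_ins_vars) (use assms in auto)
  moreover have "set (take (i-1) xs @ W @ drop i xs) \<subseteq> set xs \<union> set W" by (auto dest: in_set_takeD in_set_dropD)
  ultimately show ?thesis using assms(1,4,5) by (auto simp: linear_varlist)
qed

lemma subst_lhs:
  "subst \<theta> (Fun g (map (xi en st) ls @ ins (map Var xs) i ws)) =
     Fun g (map (\<lambda>l. subst \<theta> (xi en st l)) ls @ ins (map \<theta> xs) i (map (subst \<theta>) ws))"
  by (simp add: map_ins o_def)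

locale sim =
  fixes ar :: "'f \<Rightarrow> nat" and R :: "('f,'v) crule set" and en f Q ls r cs
    and \<sigma> :: "'v \<Rightarrow> ('f,'v) lterm" and i :: nat and xs :: "'v list" and \<sigma>' :: "'v \<Rightarrow> ('f,'v) hterm"
  assumes strong: "strong_cctrs ar R en"
    and wfs: "wf_lterm ar R (Fun (LD f Q) (map (\<lambda>l. subst \<sigma> (label R l)) ls))"
    and rho: "(Fun f ls, r, cs) \<in> Q"
    and i1: "1 \<le> i" and i2: "i \<le> mf en f" and i3: "en f ! (i - 1) = (Fun f ls, r, cs)"
    and xs1: "length xs = mf en f" and xs2: "distinct xs" and xs3: "set xs \<inter> Avars ls r cs = {}"
    and sxs: "\<And>k. k < length xs \<Longrightarrow> \<sigma>' (xs!k) = flags en Q f ! k"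
    and snxs: "\<And>x. x \<notin> set xs \<Longrightarrow> \<sigma>' x = zeta en (\<sigma> x)"
begin

abbreviation "S0 \<equiv> Fun (LD f Q) (map (\<lambda>l. subst \<sigma> (label R l)) ls)"
abbreviation "F \<equiv> flags en Q f"
definition "P = map (\<lambda>l. subst \<sigma>' (xi en htop l)) ls"
definition "H j ws = Fun (HC f i j) (P @ ins F i ws)"
definition "A' p = zeta en (subst \<sigma> (label R (fst (cs!p))))"
definition "B' p = zeta en (subst \<sigma> (label R (snd (cs!p))))"
definition "Bs m = map (\<lambda>c. subst \<sigma>' (xi en htop (snd c))) (take m cs)"

lemma QR: "Q \<subseteq> rules_of R f" using wfs by simp

lemma rhoR: "(Fun f ls, r, cs) \<in> R" using QR rho unfolding rules_of_def by auto

lemma cc: "cc_rule ar R (Fun f ls, r, cs)" using strong_rule(1)[OF strong rhoR] .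

lemma lin_l: "linear (Fun f ls)" using strong_rule(2)[OF strong rhoR] .
lemma lin_b: "list_all linear (map snd cs)" using strong_rule(3)[OF strong rhoR] .

lemma ctr_ls: "list_all (is_ctr_trm R) ls" using cc unfolding cc_rule_def by auto
lemma ctr_b: "list_all (is_ctr_trm R) (map snd cs)" using cc unfolding cc_rule_def by auto
lemma wf_l: "wf_trm ar (Fun f ls)" using cc unfolding cc_rule_def by auto
lemma wf_r: "wf_trm ar r" using cc unfolding cc_rule_def by auto
lemma wf_a: "list_all (wf_trm ar) (map fst cs)" using cc unfolding cc_rule_def by auto
lemma wf_b: "list_all (wf_trm ar) (map snd cs)" using cc unfolding cc_rule_def by auto
lemma dis_lb: "\<And>k. k < length cs \<Longrightarrow> vars (Fun f ls) \<inter> vars (snd (cs ! k)) = {}" using cc unfolding cc_rule_def by auto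
lemma dis_bb: "\<And>k m. k < length cs \<Longrightarrow> m < length cs \<Longrightarrow> k \<noteq> m \<Longrightarrow> vars (snd (cs ! k)) \<inter> vars (snd (cs ! m)) = {}"
  using cc unfolding cc_rule_def by auto
lemma vars_r: "vars r \<subseteq> vars (Fun f ls) \<union> (\<Union>k < length cs. vars (snd (cs ! k)))" using cc unfolding cc_rule_def by auto
lemma vars_a: "\<And>k. k < length cs \<Longrightarrow> vars (fst (cs ! k)) \<subseteq> vars (Fun f ls) \<union> (\<Union>j < k. vars (snd (cs ! j)))"
  using cc unfolding cc_rule_def by auto

lemma len_ls: "length ls = ar f" using wf_l by simp
lemma lenP: "length P = ar f" using len_ls by (simp add: P_def)
lemma lenF: "length F = mf en f" by (simp add: flags_def mf_def)
lemma iF: "i \<le> length F" using i2 lenF by simp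

lemma Fi: "F ! (i-1) = htop"
proof -
  have "i - 1 < length (en f)" using i1 i2 by (simp add: mf_def)
  then show ?thesis using i3 rho by (simp add: flags_def)
qed

lemma map_sxs: "map \<sigma>' xs = F"
  by (rule nth_equalityI) (use sxs xs1 lenF in auto)

lemma Avars_l: "vars (Fun f ls) \<subseteq> Avars ls r cs" unfolding Avars_def by auto
lemma Avars_r: "vars r \<subseteq> Avars ls r cs" unfolding Avars_def by auto
lemma Avars_a: "k < length cs \<Longrightarrow> vars (fst (cs!k)) \<subseteq> Avars ls r cs" unfolding Avars_def using nth_mem by fastforce
lemma Avars_b: "k < length cs \<Longrightarrow> vars (snd (cs!k)) \<subseteq> Avars ls r cs" unfolding Avars_def using nth_mem by fastforce

lemma key: "vars t \<subseteq> Avars ls r cs \<Longrightarrow> zeta en (subst \<sigma> (label R t)) = subst \<sigma>' (xi en htop t)"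
proof -
  assume a: "vars t \<subseteq> Avars ls r cs"
  have "zeta en (subst \<sigma> (label R t)) = subst (zeta en \<circ> \<sigma>) (xi en htop t)" by (rule zeta_label[OF strong])
  also have "\<dots> = subst \<sigma>' (xi en htop t)"
  proof (rule subst_cong)
    fix x assume "x \<in> vars (xi en htop t)"
    then have "x \<notin> set xs" using a xs3 by auto
    then show "(zeta en \<circ> \<sigma>) x = \<sigma>' x" using snxs by simp
  qed
  finally show ?thesis .
qed

lemma zS0: "zeta en S0 = Fun (HF f) (P @ F)"
proof -
  have "map (\<lambda>l. zeta en (subst \<sigma> (label R l))) ls = P" unfolding P_def
    by (rule map_cong[OF refl], rule key) (use Avars_l in auto)
  then show ?thesis by (simp add: flags_def o_def)
qed

lemma A'_eq: "k < length cs \<Longrightarrow> A' k = subst \<sigma>' (xi en htop (fst (cs!k)))"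
  unfolding A'_def using key Avars_a by blast
lemma B'_eq: "k < length cs \<Longrightarrow> B' k = subst \<sigma>' (xi en htop (snd (cs!k)))"
  unfolding B'_def using key Avars_b by blast
lemma r_eq: "zeta en (subst \<sigma> (label R r)) = subst \<sigma>' (xi en htop r)"
  using key Avars_r by blast

lemma Bs_Suc: "m < length cs \<Longrightarrow> Bs (Suc m) = Bs m @ [B' m]"
  unfolding Bs_def using B'_eq by (simp add: take_Suc_conv_app_nth)
lemma len_Bs: "m \<le> length cs \<Longrightarrow> length (Bs m) = m" unfolding Bs_def by simp
lemma Bs_0: "Bs 0 = []" unfolding Bs_def by simp
lemma Bs_map: "Bs m = map (subst \<sigma>') (map (xi en htop \<circ> snd) (take m cs))" unfolding Bs_def by simp

definition "Bv m = concat (map (\<lambda>c. varlist (snd c)) (take m cs))"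

lemma Bv_distinct: "distinct (Bv m)"
proof -
  have "distinct (concat (map (\<lambda>c. varlist (snd c)) (take m cs)))"
    unfolding distinct_concat_nth
  proof (intro conjI allI impI ballI)
    fix ys assume "ys \<in> set (map (\<lambda>c. varlist (snd c)) (take m cs))"
    then obtain c where "c \<in> set cs" "ys = varlist (snd c)" by (auto dest: in_set_takeD)
    then show "distinct ys" using lin_b by (auto simp: list_all_iff linear_varlist)
  next
    fix k j assume "k < length (map (\<lambda>c. varlist (snd c)) (take m cs))" "j < length (map (\<lambda>c. varlist (snd c)) (take m cs))" "k \<noteq> j"
    then show "set (map (\<lambda>c. varlist (snd c)) (take m cs) ! k) \<inter> set (map (\<lambda>c. varlist (snd c)) (take m cs) ! j) = {}"
      using dis_bb[of k j] by simp
  qed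
  then show ?thesis unfolding Bv_def .
qed

lemma Bv_set: "set (Bv m) \<subseteq> Avars ls r cs" "set (Bv m) \<inter> vars (Fun f ls) = {}"
proof -
  show "set (Bv m) \<subseteq> Avars ls r cs" unfolding Bv_def Avars_def by (auto dest: in_set_takeD)
  show "set (Bv m) \<inter> vars (Fun f ls) = {}"
  proof -
    { fix x c assume "c \<in> set (take m cs)" "x \<in> vars (snd c)" "x \<in> vars (Fun f ls)"
      then obtain k where "k < length cs" "c = cs!k" by (auto dest!: in_set_takeD simp: in_set_conv_nth)
      then have False using dis_lb \<open>x \<in> vars (snd c)\<close> \<open>x \<in> vars (Fun f ls)\<close> by blast }
    then show ?thesis unfolding Bv_def by auto
  qed
qed

lemma Bv_varlist: "concat (map varlist (map (xi en htop \<circ> snd) (take m cs))) = Bv m"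
  unfolding Bv_def by (simp add: o_def varlist_xi)

lemma xs_l: "set xs \<inter> vars (Fun f ls) = {}" using xs3 Avars_l by blast

lemma lin_generic:
  assumes "distinct W" "set W \<inter> (set xs \<union> vars (Fun f ls)) = {}" "concat (map varlist ws) = W"
  shows "linear (Fun g (map (xi en htop) ls @ ins (map Var xs) i ws))"
  by (rule lin_lhs[OF lin_l xs2 assms(1) xs_l assms(2) i1 assms(3)])

lemma lin_Bv: "linear (Fun g (map (xi en htop) ls @ ins (map Var xs) i (map (xi en htop \<circ> snd) (take m cs))))"
  by (rule lin_generic[OF Bv_distinct _ Bv_varlist]) (use Bv_set xs3 in blast)

lemma lin_top: "linear (Fun g (map (xi en htop) ls @ ins (map Var xs) i [htop]))"
  by (rule lin_generic[of "[]"]) auto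

lemma subst_main: "subst \<sigma>' (Fun g (map (xi en htop) ls @ ins (map Var xs) i ws)) = Fun g (P @ ins F i (map (subst \<sigma>') ws))"
  unfolding subst_lhs P_def map_sxs ..

lemma R2: assumes "cs \<noteq> []" shows "cstep (Xi ar R en) (mu ar) (zeta en S0) (H 1 [A' 0]) 0"
proof -
  have mem: "(Fun (HF f) (map (xi en htop) ls @ ins (map Var xs) i [htop]),
      Fun (HC f i 1) (map (xi en htop) ls @ ins (map Var xs) i [xi en htop (fst (cs ! 0))]), 0) \<in> Xi ar R en"
    by (rule Xi2[OF i1 i2 i3 assms xs1 refl lin_top])
  have "cstep (Xi ar R en) (mu ar) (subst \<sigma>' (Fun (HF f) (map (xi en htop) ls @ ins (map Var xs) i [htop])))
      (subst \<sigma>' (Fun (HC f i 1) (map (xi en htop) ls @ ins (map Var xs) i [xi en htop (fst (cs ! 0))]))) 0"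
    by (rule root_cstep[OF mem])
  moreover have e1: "subst \<sigma>' (Fun (HF f) (map (xi en htop) ls @ ins (map Var xs) i [htop])) = zeta en S0"
    unfolding subst_main zS0 using ins_nth[OF i1 iF] Fi by simp
  moreover have e2: "subst \<sigma>' (Fun (HC f i 1) (map (xi en htop) ls @ ins (map Var xs) i [xi en htop (fst (cs ! 0))])) = H 1 [A' 0]"
    unfolding subst_main H_def using A'_eq[of 0] assms by simp
  ultimately show ?thesis by (simp only:)
qed

lemma R1: assumes "cs = []" shows "cstep (Xi ar R en) (mu ar) (zeta en S0) (zeta en (subst \<sigma> (label R r))) 1"
proof -
  have i3': "en f ! (i - 1) = (Fun f ls, r, [])" using i3 assms by simp
  have mem: "(Fun (HF f) (map (xi en htop) ls @ ins (map Var xs) i [htop]), xi en htop r, 1) \<in> Xi ar R en"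
    by (rule Xi1[OF i1 i2 i3' xs1 refl lin_top])
  have "cstep (Xi ar R en) (mu ar) (subst \<sigma>' (Fun (HF f) (map (xi en htop) ls @ ins (map Var xs) i [htop])))
      (subst \<sigma>' (xi en htop r)) 1"
    by (rule root_cstep[OF mem])
  moreover have "subst \<sigma>' (Fun (HF f) (map (xi en htop) ls @ ins (map Var xs) i [htop])) = zeta en S0"
    unfolding subst_main zS0 using ins_nth[OF i1 iF] Fi by simp
  ultimately show ?thesis using r_eq by (simp only:)
qed

lemma R3: assumes "cs \<noteq> []" shows "cstep (Xi ar R en) (mu ar) (H (length cs) (Bs (length cs))) (zeta en (subst \<sigma> (label R r))) 1"
proof -
  have mem: "(Fun (HC f i (length cs)) (map (xi en htop) ls @ ins (map Var xs) i (map (xi en htop \<circ> snd) cs)), xi en htop r, 1) \<in> Xi ar R en"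
    by (rule Xi3[OF i1 i2 i3 assms xs1 refl]) (use lin_Bv[of _ "length cs"] in simp)
  have "cstep (Xi ar R en) (mu ar) (subst \<sigma>' (Fun (HC f i (length cs)) (map (xi en htop) ls @ ins (map Var xs) i (map (xi en htop \<circ> snd) cs))))
      (subst \<sigma>' (xi en htop r)) 1"
    by (rule root_cstep[OF mem])
  moreover have "subst \<sigma>' (Fun (HC f i (length cs)) (map (xi en htop) ls @ ins (map Var xs) i (map (xi en htop \<circ> snd) cs))) = H (length cs) (Bs (length cs))"
    unfolding subst_main H_def Bs_map by simp
  ultimately show ?thesis using r_eq by simp
qed

lemma R4: assumes "Suc m < length cs"
  shows "cstep (Xi ar R en) (mu ar) (H (Suc m) (Bs (Suc m))) (H (Suc (Suc m)) (Bs (Suc m) @ [A' (Suc m)])) 0"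
proof -
  have j1: "1 \<le> Suc m" by simp
  have mem: "(Fun (HC f i (Suc m)) (map (xi en htop) ls @ ins (map Var xs) i (map (xi en htop \<circ> snd) (take (Suc m) cs))),
     Fun (HC f i (Suc (Suc m))) (map (xi en htop) ls @
               ins (map Var xs) i (map (xi en htop \<circ> snd) (take (Suc m) cs) @ [xi en htop (fst (cs ! Suc m))])), 0) \<in> Xi ar R en"
    by (rule Xi4[OF i1 i2 i3 j1 assms xs1 refl lin_Bv])
  note st = root_cstep[OF mem, where \<sigma> = \<sigma>' and \<mu> = "mu ar"]
  have "subst \<sigma>' (Fun (HC f i (Suc m)) (map (xi en htop) ls @ ins (map Var xs) i (map (xi en htop \<circ> snd) (take (Suc m) cs)))) = H (Suc m) (Bs (Suc m))"
    unfolding subst_main H_def Bs_map ..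
  moreover have "subst \<sigma>' (Fun (HC f i (Suc (Suc m))) (map (xi en htop) ls @
               ins (map Var xs) i (map (xi en htop \<circ> snd) (take (Suc m) cs) @ [xi en htop (fst (cs ! Suc m))]))) =
     H (Suc (Suc m)) (Bs (Suc m) @ [A' (Suc m)])"
    unfolding subst_main H_def Bs_map using A'_eq[of "Suc m"] assms by simp
  ultimately show ?thesis using st by simp
qed

lemma Rctx: assumes "m < length cs" "csteps (Xi ar R en) (mu ar) t t' c"
  shows "csteps (Xi ar R en) (mu ar) (H (Suc m) (Bs m @ [t])) (H (Suc m) (Bs m @ [t'])) c"
proof -
  have lb: "length (Bs m) = m" using len_Bs assms(1) by simp
  have pos: "length P + (i-1) + m < length (P @ ins F i (Bs m @ [t]))" by (rule length_ins_pos[OF i1 iF lb])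
  have mu: "Suc (length P + (i-1) + m) \<in> mu ar (HC f i (Suc m))" using lenP i1 by simp
  have "csteps (Xi ar R en) (mu ar) (Fun (HC f i (Suc m)) (P @ ins F i (Bs m @ [t])))
     (Fun (HC f i (Suc m)) ((P @ ins F i (Bs m @ [t]))[length P + (i-1) + m := t'])) c"
    apply (rule csteps_ctxt)
    using ins_nth_pos[OF i1 iF lb] assms(2) pos mu by simp_all
  then show ?thesis unfolding H_def ins_upd_pos[OF i1 iF lb] .
qed

lemma Hactsub: assumes "m < length cs"
  shows "actsub (mu ar) (H (Suc m) (Bs m @ [t])) t"
proof -
  have lb: "length (Bs m) = m" using len_Bs assms(1) by simp
  have pos: "length P + (i-1) + m < length (P @ ins F i (Bs m @ [t]))" by (rule length_ins_pos[OF i1 iF lb])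
  have mu: "Suc (length P + (i-1) + m) \<in> mu ar (HC f i (Suc m))" using lenP i1 by simp
  show ?thesis unfolding H_def
    apply (rule as_arg[where i = "length P + (i-1) + m"])
    using ins_nth_pos[OF i1 iF lb] pos mu by (simp_all add: as_refl)
qed

lemma run:
  "m < length cs \<Longrightarrow> m \<le> length ns \<Longrightarrow> (\<forall>p<m. csteps (Xi ar R en) (mu ar) (A' p) (B' p) (ns!p)) \<Longrightarrow>
   cplus (Xi ar R en) (mu ar) (zeta en S0) (H (Suc m) (Bs m @ [A' m])) (sum_list (take m ns))"
proof (induction m)
  case 0
  then have "cs \<noteq> []" by auto
  then show ?case using R2 cstep_cplus Bs_0 by fastforce
next
  case (Suc m)
  have IH: "cplus (Xi ar R en) (mu ar) (zeta en S0) (H (Suc m) (Bs m @ [A' m])) (sum_list (take m ns))"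
    using Suc by auto
  have "csteps (Xi ar R en) (mu ar) (H (Suc m) (Bs m @ [A' m])) (H (Suc m) (Bs m @ [B' m])) (ns!m)"
    by (rule Rctx) (use Suc in auto)
  then have "csteps (Xi ar R en) (mu ar) (H (Suc m) (Bs m @ [A' m])) (H (Suc m) (Bs (Suc m))) (ns!m)"
    using Bs_Suc Suc.prems by simp
  moreover have "cstep (Xi ar R en) (mu ar) (H (Suc m) (Bs (Suc m))) (H (Suc (Suc m)) (Bs (Suc m) @ [A' (Suc m)])) 0"
    by (rule R4) (use Suc in simp)
  ultimately have "csteps (Xi ar R en) (mu ar) (H (Suc m) (Bs m @ [A' m])) (H (Suc (Suc m)) (Bs (Suc m) @ [A' (Suc m)])) (ns!m + 0)"
    using csteps_trans cstep_csteps by blast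
  from cplus_csteps_trans[OF IH this] show ?case
    using Suc.prems by (simp add: take_Suc_conv_app_nth)
qed

end

lemma vars_label[simp]: "vars (label R t) = vars t"
  by (induction t) auto

lemma flags_top: "1 \<le> i \<Longrightarrow> i \<le> length (en f) \<Longrightarrow> en f ! (i-1) = \<rho> \<Longrightarrow> \<rho> \<in> Q \<Longrightarrow> ins (flags en Q f) i [htop] = flags en Q f"
  using ins_nth[of i "flags en Q f"] by (simp add: flags_def)

lemma flags_remove:
  assumes "distinct (en f)" "1 \<le> i" "i \<le> length (en f)" "en f ! (i-1) = \<rho>"
  shows "ins (flags en Q f) i [hbot] = flags en (Q - {\<rho>}) f"
proof -
  have "ins (flags en Q f) i [hbot] = (flags en Q f)[i-1 := hbot]" using assms by (simp add: ins_upd flags_def)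
  also have "\<dots> = flags en (Q - {\<rho>}) f"
  proof (rule nth_equalityI)
    fix k assume k: "k < length ((flags en Q f)[i-1 := hbot])"
    then have k': "k < length (en f)" by (simp add: flags_def)
    show "(flags en Q f)[i-1 := hbot] ! k = flags en (Q - {\<rho>}) f ! k"
    proof (cases "k = i - 1")
      case True then show ?thesis using assms k' by (simp add: flags_def)
    next
      case False
      then have "en f ! k \<noteq> \<rho>" using assms k' nth_eq_iff_index_eq[of "en f" k "i-1"] by auto
      then show ?thesis using False k' by (simp add: flags_def)
    qed
  qed (simp add: flags_def)
  finally show ?thesis .
qed

lemma rule_index:
  assumes "strong_cctrs ar R en" "\<rho> \<in> rules_of R f"
  shows "\<exists>i. 1 \<le> i \<and> i \<le> mf en f \<and> en f ! (i-1) = \<rho>"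
proof -
  have "\<rho> \<in> set (en f)" using strong_en(1)[OF assms(1)] assms(2) by simp
  then obtain k where "k < length (en f)" "en f ! k = \<rho>" by (auto simp: in_set_conv_nth)
  then show ?thesis by (intro exI[of _ "Suc k"]) (simp add: mf_def)
qed

lemma sim_exists:
  fixes R :: "('f,'v) crule set"
  assumes inf: "infinite (UNIV :: 'v set)" and strong: "strong_cctrs ar R en"
    and wfs: "wf_lterm ar R (Fun (LD f Q) (map (\<lambda>l. subst \<sigma> (label R l)) ls))"
    and rho: "(Fun f ls, r, cs) \<in> Q"
  shows "\<exists>i xs \<sigma>'. sim ar R en f Q ls r cs \<sigma> i xs \<sigma>'"
proof -
  have "Q \<subseteq> rules_of R f" using wfs by simp
  then obtain i where i: "1 \<le> i" "i \<le> mf en f" "en f ! (i-1) = (Fun f ls, r, cs)"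
    using rule_index[OF strong, of "(Fun f ls, r, cs)" f] rho by blast
  obtain xs :: "'v list" where xs: "length xs = mf en f" "distinct xs" "set xs \<inter> Avars ls r cs = {}"
    using fresh_list[OF inf finite_Avars] by blast
  obtain \<theta> :: "'v \<Rightarrow> ('f,'v) hterm" where \<theta>: "\<forall>k<length xs. \<theta> (xs!k) = flags en Q f ! k"
    using subst_of_list[OF xs(2), of "flags en Q f"] xs by (auto simp: flags_def mf_def)
  define \<sigma>' where "\<sigma>' x = (if x \<in> set xs then \<theta> x else zeta en (\<sigma> x))" for x
  have "sim ar R en f Q ls r cs \<sigma> i xs \<sigma>'"
    by unfold_locales (use strong wfs rho i xs \<theta> in \<open>auto simp: \<sigma>'_def\<close>)
  then show ?thesis by blast
qed

context sim begin

lemma zS0': "zeta en (Fun (LD f Q') (map (\<lambda>l. subst \<sigma> (label R l)) ls)) = Fun (HF f) (P @ flags en Q' f)"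
proof -
  have "map (\<lambda>l. zeta en (subst \<sigma> (label R l))) ls = P" unfolding P_def
    by (rule map_cong[OF refl], rule key) (use Avars_l in auto)
  then show ?thesis by (simp add: flags_def o_def)
qed

lemma F_remove: "ins F i [hbot] = flags en (Q - {(Fun f ls, r, cs)}) f"
  by (rule flags_remove) (use strong_en(2)[OF strong] i1 i2 i3 in \<open>auto simp: mf_def\<close>)

lemma R5:
  assumes m: "m < length cs" and ap: "AP ar R en (snd (cs!m)) v"
    and vv: "vars v \<inter> (Avars ls r cs \<union> set xs) = {}" and lv: "linear v"
  shows "cstep (Xi ar R en) (mu ar) (H (Suc m) (Bs m @ [subst \<theta> v])) (zeta en (Fun (LD f (Q - {(Fun f ls, r, cs)})) (map (\<lambda>l. subst \<sigma> (label R l)) ls))) 0"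
proof -
  define \<sigma>'' where "\<sigma>'' x = (if x \<in> vars v then \<theta> x else \<sigma>' x)" for x
  have agree: "subst \<sigma>'' t = subst \<sigma>' t" if "vars t \<subseteq> Avars ls r cs \<union> set xs" for t
    by (rule subst_cong) (use that vv in \<open>auto simp: \<sigma>''_def\<close>)
  have dW: "distinct (Bv m @ varlist v)" using Bv_distinct Bv_set(1) vv lv by (auto simp: linear_varlist)
  have s1: "set (Bv m) \<inter> set xs = {}" using Bv_set(1)[of m] xs3 by blast
  have s2: "set (Bv m) \<inter> vars (Fun f ls) = {}" using Bv_set(2)[of m] .
  have s3: "vars v \<inter> (set xs \<union> vars (Fun f ls)) = {}" using vv Avars_l by blast
  have sW: "set (Bv m @ varlist v) \<inter> (set xs \<union> vars (Fun f ls)) = {}"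
    using s1 s2 s3 by auto
  have lin: "linear (Fun (HC f i (Suc m)) (map (xi en htop) ls @ ins (map Var xs) i (map (xi en htop \<circ> snd) (take (Suc m - 1) cs) @ [v])))"
    unfolding diff_Suc_1 by (rule lin_generic[OF dW sW]) (simp add: Bv_varlist[symmetric])
  have ap': "AP ar R en (snd (cs ! (Suc m - 1))) v" using ap by simp
  have mem: "(Fun (HC f i (Suc m)) (map (xi en htop) ls @ ins (map Var xs) i (map (xi en htop \<circ> snd) (take (Suc m - 1) cs) @ [v])),
       Fun (HF f) (map (xi en htop) ls @ ins (map Var xs) i [hbot]), 0) \<in> Xi ar R en"
    by (rule Xi5[OF i1 i2 i3 _ _ ap' xs1 refl lin]) (use m in auto)
  note st = root_cstep[OF mem, where \<sigma> = \<sigma>'' and \<mu> = "mu ar"]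
  have P'': "map (\<lambda>l. subst \<sigma>'' (xi en htop l)) ls = P" unfolding P_def
    by (rule map_cong[OF refl], rule agree) (use Avars_l in \<open>auto\<close>)
  have "map \<sigma>'' xs = map \<sigma>' xs"
  proof (rule map_cong[OF refl])
    fix x assume "x \<in> set xs" then have "x \<notin> vars v" using vv by blast
    then show "\<sigma>'' x = \<sigma>' x" by (simp add: \<sigma>''_def)
  qed
  then have X'': "map \<sigma>'' xs = F" using map_sxs by simp
  have B'': "map (subst \<sigma>'') (map (xi en htop \<circ> snd) (take m cs)) = Bs m" unfolding Bs_def
  proof (rule nth_equalityI)
    fix k assume "k < length (map (subst \<sigma>'') (map (xi en htop \<circ> snd) (take m cs)))"
    then have k: "k < m" "k < length cs" by auto
    have "subst \<sigma>'' (xi en htop (snd (cs!k))) = subst \<sigma>' (xi en htop (snd (cs!k)))"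
      by (rule agree) (use Avars_b[OF k(2)] in auto)
    then show "map (subst \<sigma>'') (map (xi en htop \<circ> snd) (take m cs)) ! k = map (\<lambda>c. subst \<sigma>' (xi en htop (snd c))) (take m cs) ! k"
      using k by simp
  qed simp
  have v'': "subst \<sigma>'' v = subst \<theta> v" by (rule subst_cong) (simp add: \<sigma>''_def)
  have e1: "subst \<sigma>'' (Fun (HC f i (Suc m)) (map (xi en htop) ls @ ins (map Var xs) i (map (xi en htop \<circ> snd) (take (Suc m - 1) cs) @ [v])))
     = H (Suc m) (Bs m @ [subst \<theta> v])"
    unfolding diff_Suc_1 subst_lhs H_def P'' X'' using B'' v'' by simp
  have e2: "subst \<sigma>'' (Fun (HF f) (map (xi en htop) ls @ ins (map Var xs) i [hbot]))
     = zeta en (Fun (LD f (Q - {(Fun f ls, r, cs)})) (map (\<lambda>l. subst \<sigma> (label R l)) ls))"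
    unfolding subst_lhs P'' X'' zS0' F_remove[symmetric] by simp
  show ?thesis using st unfolding e1 e2 .
qed

lemma succ_sim:
  assumes "length ns = length cs" "\<forall>p<length cs. csteps (Xi ar R en) (mu ar) (A' p) (B' p) (ns!p)"
  shows "cplus (Xi ar R en) (mu ar) (zeta en S0) (zeta en (subst \<sigma> (label R r))) (Suc (sum_list ns))"
proof (cases "cs = []")
  case True
  then show ?thesis using R1 cstep_cplus assms(1) by fastforce
next
  case False
  define m where "m = length cs - 1"
  have m: "m < length cs" "Suc m = length cs" using False by (auto simp: m_def)
  have c1: "cplus (Xi ar R en) (mu ar) (zeta en S0) (H (Suc m) (Bs m @ [A' m])) (sum_list (take m ns))"
    by (rule run) (use m assms in auto)
  have "csteps (Xi ar R en) (mu ar) (H (Suc m) (Bs m @ [A' m])) (H (Suc m) (Bs m @ [B' m])) (ns!m)"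
    by (rule Rctx) (use m assms in auto)
  then have c2: "csteps (Xi ar R en) (mu ar) (H (Suc m) (Bs m @ [A' m])) (H (length cs) (Bs (length cs))) (ns!m)"
    using Bs_Suc[OF m(1)] m(2) by simp
  have c3: "cstep (Xi ar R en) (mu ar) (H (length cs) (Bs (length cs))) (zeta en (subst \<sigma> (label R r))) 1"
    by (rule R3[OF False])
  have "cplus (Xi ar R en) (mu ar) (zeta en S0) (zeta en (subst \<sigma> (label R r))) (sum_list (take m ns) + ns!m + 1)"
    using cplus_csteps_trans[OF cplus_csteps_trans[OF c1 c2] cstep_csteps[OF c3]] .
  moreover have "sum_list (take m ns) + ns!m + 1 = Suc (sum_list ns)"
  proof -
    have "take (Suc m) ns = ns" using m assms(1) by simp
    then have e: "ns = take m ns @ [ns!m]" using m assms(1) take_Suc_conv_app_nth[of m ns] by simp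
    have "sum_list ns = sum_list (take m ns @ [ns!m])" using arg_cong[OF e, of sum_list] .
    then have "sum_list ns = sum_list (take m ns) + ns!m" by simp
    then show ?thesis by simp
  qed
  ultimately show ?thesis by simp
qed

lemma fail_sim:
  assumes inf: "infinite (UNIV :: 'v set)"
    and j: "j < length cs" "length ns = j" "\<forall>p<j. csteps (Xi ar R en) (mu ar) (A' p) (B' p) (ns!p)"
    and a: "csteps (Xi ar R en) (mu ar) (A' j) (zeta en (subst \<tau> u)) mm"
    and u: "lnf u" "linear u" "vars u \<inter> vars (snd (cs ! j)) = {}" "\<not> unifiable (erase u) (snd (cs ! j))"
      "wf_lterm ar R (subst \<tau> u)"
  shows "cplus (Xi ar R en) (mu ar) (zeta en S0) (zeta en (Fun (LD f (Q - {(Fun f ls, r, cs)})) (map (\<lambda>l. subst \<sigma> (label R l)) ls))) (sum_list ns + mm)"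
proof -
  have c1: "cplus (Xi ar R en) (mu ar) (zeta en S0) (H (Suc j) (Bs j @ [A' j])) (sum_list (take j ns))"
    by (rule run) (use j in auto)
  have c2: "csteps (Xi ar R en) (mu ar) (H (Suc j) (Bs j @ [A' j])) (H (Suc j) (Bs j @ [zeta en (subst \<tau> u)])) mm"
    by (rule Rctx[OF j(1) a])
  have "\<exists>v \<theta>. AP ar R en (snd (cs!j)) v \<and> zeta en (subst \<tau> u) = subst \<theta> v \<and> vars v \<inter> (Avars ls r cs \<union> set xs) = {} \<and> linear v"
    by (rule AP_exists[OF inf])
       (use j u ctr_b wf_b lin_b finite_Avars in \<open>auto simp: list_all_length\<close>)
  then obtain v \<theta> where v: "AP ar R en (snd (cs!j)) v" "zeta en (subst \<tau> u) = subst \<theta> v"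
    "vars v \<inter> (Avars ls r cs \<union> set xs) = {}" "linear v" by blast
  have c3: "cstep (Xi ar R en) (mu ar) (H (Suc j) (Bs j @ [zeta en (subst \<tau> u)])) (zeta en (Fun (LD f (Q - {(Fun f ls, r, cs)})) (map (\<lambda>l. subst \<sigma> (label R l)) ls))) 0"
    unfolding v(2) by (rule R5[OF j(1) v(1) v(3) v(4)])
  show ?thesis
    using cplus_csteps_trans[OF cplus_csteps_trans[OF c1 c2] cstep_csteps[OF c3]] j(2) by simp
qed

lemma cond_sim:
  assumes j: "j < length cs" "\<forall>p<j. \<exists>n. csteps (Xi ar R en) (mu ar) (A' p) (B' p) n"
  shows "\<exists>D c. cplus (Xi ar R en) (mu ar) (zeta en S0) D c \<and> actsub (mu ar) D (A' j)"
proof -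
  have "\<forall>p. \<exists>n. p < j \<longrightarrow> csteps (Xi ar R en) (mu ar) (A' p) (B' p) n" using j(2) by blast
  from choice[OF this] obtain g where g: "\<And>p. p < j \<Longrightarrow> csteps (Xi ar R en) (mu ar) (A' p) (B' p) (g p)" by blast
  define ns where "ns = map g [0..<j]"
  have "cplus (Xi ar R en) (mu ar) (zeta en S0) (H (Suc j) (Bs j @ [A' j])) (sum_list (take j ns))"
    by (rule run) (use j g in \<open>auto simp: ns_def\<close>)
  then show ?thesis using Hactsub[OF j(1)] by blast
qed

lemma wf_sig_l: "x \<in> vars (Fun f ls) \<Longrightarrow> wf_lterm ar R (\<sigma> x)"
proof -
  assume "x \<in> vars (Fun f ls)"
  then obtain l where l: "l \<in> set ls" "x \<in> vars l" by auto
  have "list_all (wf_lterm ar R) (map (\<lambda>l. subst \<sigma> (label R l)) ls)" using wfs by simp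
  then have "wf_lterm ar R (subst \<sigma> (label R l))" using l by (auto simp: list_all_iff)
  then show ?thesis using wf_subst_vars l by fastforce
qed

lemma wf_fst:
  assumes "p < length cs" "\<forall>q<p. \<forall>x\<in>vars (snd (cs!q)). wf_lterm ar R (\<sigma> x)"
  shows "wf_lterm ar R (subst \<sigma> (label R (fst (cs!p))))"
proof (rule wf_subst_label)
  show "wf_trm ar (fst (cs ! p))" using wf_a assms(1) by (simp add: list_all_length)
  show "\<forall>x\<in>vars (fst (cs ! p)). wf_lterm ar R (\<sigma> x)"
    using vars_a[OF assms(1)] assms(2) wf_sig_l by blast
qed

lemma wf_snds:
  "j \<le> length cs \<Longrightarrow> (\<forall>p<j. wf_lterm ar R (subst \<sigma> (label R (fst (cs!p)))) \<longrightarrow> wf_lterm ar R (subst \<sigma> (label R (snd (cs!p)))))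
   \<Longrightarrow> \<forall>p<j. \<forall>x\<in>vars (snd (cs!p)). wf_lterm ar R (\<sigma> x)"
proof (induction j)
  case 0 then show ?case by simp
next
  case (Suc j)
  have IH: "\<forall>p<j. \<forall>x\<in>vars (snd (cs!p)). wf_lterm ar R (\<sigma> x)" using Suc by auto
  have "wf_lterm ar R (subst \<sigma> (label R (fst (cs!j))))" using wf_fst[of j] IH Suc.prems by auto
  then have "wf_lterm ar R (subst \<sigma> (label R (snd (cs!j))))" using Suc.prems by auto
  then have "\<forall>x\<in>vars (snd (cs!j)). wf_lterm ar R (\<sigma> x)" using wf_subst_vars by fastforce
  then show ?case using IH less_Suc_eq by auto
qed

lemma wf_res: "(\<forall>p<length cs. \<forall>x\<in>vars (snd (cs!p)). wf_lterm ar R (\<sigma> x)) \<Longrightarrow> wf_lterm ar R (subst \<sigma> (label R r))"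
  by (rule wf_subst_label[OF wf_r]) (use vars_r wf_sig_l in blast)

end

context sim begin

lemma succ_case:
  assumes "length ns = length cs"
    "\<forall>p<length cs. wf_lterm ar R (subst \<sigma> (label R (fst (cs!p)))) \<longrightarrow>
        wf_lterm ar R (subst \<sigma> (label R (snd (cs!p)))) \<and>
        csteps (Xi ar R en) (mu ar) (zeta en (subst \<sigma> (label R (fst (cs!p))))) (zeta en (subst \<sigma> (label R (snd (cs!p))))) (ns!p)"
  shows "wf_lterm ar R (subst \<sigma> (label R r)) \<and>
     cplus (Xi ar R en) (mu ar) (zeta en S0) (zeta en (subst \<sigma> (label R r))) (Suc (sum_list ns))"
proof -
  have ws: "\<forall>p<length cs. \<forall>x\<in>vars (snd (cs!p)). wf_lterm ar R (\<sigma> x)"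
    by (rule wf_snds) (use assms(2) in auto)
  have src: "wf_lterm ar R (subst \<sigma> (label R (fst (cs!p))))" if "p < length cs" for p
  proof (rule wf_fst)
    show "\<forall>q<p. \<forall>x\<in>vars (snd (cs ! q)). wf_lterm ar R (\<sigma> x)"
    proof (intro allI impI ballI)
      fix q x assume "q < p" "x \<in> vars (snd (cs ! q))"
      moreover have "q < length cs" using \<open>q < p\<close> that by simp
      ultimately show "wf_lterm ar R (\<sigma> x)" using ws by blast
    qed
  qed (use that in simp)
  have "\<forall>p<length cs. csteps (Xi ar R en) (mu ar) (A' p) (B' p) (ns!p)"
    unfolding A'_def B'_def using assms(2) src by blast
  then show ?thesis using succ_sim[OF assms(1)] wf_res[OF ws] by blast
qed

lemma fail_case:
  assumes inf: "infinite (UNIV :: 'v set)" and j: "j < length cs" "length ns = j"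
    "\<forall>p<j. wf_lterm ar R (subst \<sigma> (label R (fst (cs!p)))) \<longrightarrow>
        wf_lterm ar R (subst \<sigma> (label R (snd (cs!p)))) \<and>
        csteps (Xi ar R en) (mu ar) (zeta en (subst \<sigma> (label R (fst (cs!p))))) (zeta en (subst \<sigma> (label R (snd (cs!p))))) (ns!p)"
    and a: "wf_lterm ar R (subst \<sigma> (label R (fst (cs!j)))) \<longrightarrow> wf_lterm ar R (subst \<tau> u) \<and>
        csteps (Xi ar R en) (mu ar) (zeta en (subst \<sigma> (label R (fst (cs!j))))) (zeta en (subst \<tau> u)) mm"
    and u: "lnf u" "linear u" "vars u \<inter> vars (snd (cs ! j)) = {}" "\<not> unifiable (erase u) (snd (cs ! j))"
  shows "wf_lterm ar R (Fun (LD f (Q - {(Fun f ls, r, cs)})) (map (\<lambda>l. subst \<sigma> (label R l)) ls)) \<and>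
    cplus (Xi ar R en) (mu ar) (zeta en S0) (zeta en (Fun (LD f (Q - {(Fun f ls, r, cs)})) (map (\<lambda>l. subst \<sigma> (label R l)) ls))) (sum_list ns + mm)"
proof -
  have ws: "\<forall>p<j. \<forall>x\<in>vars (snd (cs!p)). wf_lterm ar R (\<sigma> x)"
    by (rule wf_snds) (use j in auto)
  have src: "wf_lterm ar R (subst \<sigma> (label R (fst (cs!p))))" if "p \<le> j" for p
  proof (rule wf_fst)
    show "\<forall>q<p. \<forall>x\<in>vars (snd (cs ! q)). wf_lterm ar R (\<sigma> x)"
    proof (intro allI impI ballI)
      fix q x assume "q < p" "x \<in> vars (snd (cs ! q))"
      moreover have "q < j" using \<open>q < p\<close> that by simp
      ultimately show "wf_lterm ar R (\<sigma> x)" using ws by blast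
    qed
  qed (use that j(1) in simp)
  have c: "\<forall>p<j. csteps (Xi ar R en) (mu ar) (A' p) (B' p) (ns!p)"
    unfolding A'_def B'_def using j(3) src by auto
  have a': "wf_lterm ar R (subst \<tau> u)" "csteps (Xi ar R en) (mu ar) (A' j) (zeta en (subst \<tau> u)) mm"
    unfolding A'_def using a src[of j] by auto
  have "wf_lterm ar R (Fun (LD f (Q - {(Fun f ls, r, cs)})) (map (\<lambda>l. subst \<sigma> (label R l)) ls))"
    using wfs by auto
  then show ?thesis using fail_sim[OF inf j(1,2) c a'(2) u a'(1)] by blast
qed

lemma cond_case:
  assumes j: "j < length cs"
    "\<forall>p<j. wf_lterm ar R (subst \<sigma> (label R (fst (cs!p)))) \<longrightarrow>
        wf_lterm ar R (subst \<sigma> (label R (snd (cs!p)))) \<and>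
        (\<exists>n. csteps (Xi ar R en) (mu ar) (zeta en (subst \<sigma> (label R (fst (cs!p))))) (zeta en (subst \<sigma> (label R (snd (cs!p))))) n)"
  shows "wf_lterm ar R (subst \<sigma> (label R (fst (cs!j)))) \<and>
    (\<exists>D c. cplus (Xi ar R en) (mu ar) (zeta en S0) D c \<and> actsub (mu ar) D (zeta en (subst \<sigma> (label R (fst (cs!j))))))"
proof -
  have ws: "\<forall>p<j. \<forall>x\<in>vars (snd (cs!p)). wf_lterm ar R (\<sigma> x)"
    by (rule wf_snds) (use j in auto)
  have src: "wf_lterm ar R (subst \<sigma> (label R (fst (cs!p))))" if "p \<le> j" for p
  proof (rule wf_fst)
    show "\<forall>q<p. \<forall>x\<in>vars (snd (cs ! q)). wf_lterm ar R (\<sigma> x)"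
    proof (intro allI impI ballI)
      fix q x assume "q < p" "x \<in> vars (snd (cs ! q))"
      moreover have "q < j" using \<open>q < p\<close> that by simp
      ultimately show "wf_lterm ar R (\<sigma> x)" using ws by blast
    qed
  qed (use that j(1) in simp)
  have c: "\<forall>p<j. \<exists>n. csteps (Xi ar R en) (mu ar) (A' p) (B' p) n"
    unfolding A'_def B'_def using j(2) src by auto
  show ?thesis using cond_sim[OF j(1) c] src[of j] unfolding A'_def by blast
qed

end

lemma unif_args:
  fixes us :: "('f,'v) lterm list" and bs :: "('f,'v) trm list"
  assumes len: "length us = length bs" and lu: "linear (Fun g us)" and lb: "linear (Fun c bs)"
    and dis: "vars (Fun g us) \<inter> vars (Fun c bs) = {}"
    and nu: "\<not> unifiable (Fun c (map erase us)) (Fun c bs)"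
  shows "\<exists>k<length bs. \<not> unifiable (erase (us!k)) (bs!k)"
proof (rule ccontr)
  assume "\<not> ?thesis"
  then have allu: "\<forall>k<length (map erase us). unifiable (map erase us ! k) (bs!k)" using len by auto
  have "unifiable (Fun c (map erase us)) (Fun c bs)"
  proof (rule unif_combine[OF _ allu])
    show "\<forall>k<length (map erase us). \<forall>m<length (map erase us). k \<noteq> m \<longrightarrow>
       (vars (map erase us ! k) \<union> vars (bs ! k)) \<inter> (vars (map erase us ! m) \<union> vars (bs ! m)) = {}"
    proof (intro allI impI)
      fix k m assume km: "k < length (map erase us)" "m < length (map erase us)" "k \<noteq> m"
      then have km': "k < length us" "m < length us" "k < length bs" "m < length bs" using len by auto
      have 1: "vars (us!k) \<inter> vars (us!m) = {}" using linear_disj[OF lu km'(1,2) km(3)] .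
      have 2: "vars (bs!k) \<inter> vars (bs!m) = {}" using linear_disj[OF lb km'(3,4) km(3)] .
      have 3: "vars (us!k) \<inter> vars (bs!m) = {}" "vars (us!m) \<inter> vars (bs!k) = {}"
        using dis vars_nth_sub[OF km'(1), of g] vars_nth_sub[OF km'(2), of g]
          vars_nth_sub[OF km'(3), of c] vars_nth_sub[OF km'(4), of c] by blast+
      show "(vars (map erase us ! k) \<union> vars (bs ! k)) \<inter> (vars (map erase us ! m) \<union> vars (bs ! m)) = {}"
        using 1 2 3 km' by auto
    qed
  qed (use len in simp)
  then show False using nu by simp
qed

lemma bot_sim:
  fixes R :: "('f,'v) crule set"
  assumes inf: "infinite (UNIV :: 'v set)" and strong: "strong_cctrs ar R en"
    and wfs: "wf_lterm ar R (Fun (LD f Q) ss)"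
    and rho: "(l, r, cs) \<in> Q" and len: "length us = length ss" and lnfu: "list_all lnf us"
    and linu: "linear (Fun (LD f Q) us)" and disu: "(\<Union>u \<in> set us. vars u) \<inter> vars l = {}"
    and match: "Fun (LD f Q) ss = subst \<sigma> (Fun (LD f Q) us)"
    and nu: "\<not> unifiable (Fun f (map erase us)) l"
  shows "cstep (Xi ar R en) (mu ar) (zeta en (Fun (LD f Q) ss)) (zeta en (Fun (LD f (Q - {(l, r, cs)})) ss)) 0"
proof -
  have QR: "Q \<subseteq> rules_of R f" using wfs by simp
  then have rR: "(l, r, cs) \<in> R" "root l = Some f" using rho unfolding rules_of_def by auto
  have cc: "cc_rule ar R (l, r, cs)" using strong_rule(1)[OF strong rR(1)] .
  then obtain f' ls where l: "l = Fun f' ls" "list_all (is_ctr_trm R) ls" "wf_trm ar l" unfolding cc_rule_def by auto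
  have f': "f' = f" using rR(2) l(1) by simp
  have linl: "linear l" using strong_rule(2)[OF strong rR(1)] .
  have lenl: "length ls = ar f" using l f' by simp
  have lenss: "length ss = ar f" using wfs by simp
  have ss: "ss = map (subst \<sigma>) us" using match by simp
  have lenu: "length us = length ls" using len lenl lenss by simp
  obtain k where k: "k < length ls" "\<not> unifiable (erase (us!k)) (ls!k)"
  proof -
    have "\<exists>k<length ls. \<not> unifiable (erase (us!k)) (ls!k)"
      by (rule unif_args[OF lenu linu, of f]) (use linl l f' disu nu in auto)
    then show ?thesis using that by blast
  qed
  have ku: "k < length us" using k lenu by simp
  obtain i where i: "1 \<le> i" "i \<le> mf en f" "en f ! (i-1) = (l, r, cs)"
    using rule_index[OF strong, of "(l, r, cs)" f] rho QR by blast
  have i3: "en f ! (i-1) = (Fun f ls, r, cs)" using i l f' by simp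
  obtain xs :: "'v list" where xs: "length xs = mf en f" "distinct xs"
    using fresh_list[OF inf, of "{}" "mf en f"] by auto
  obtain ys :: "'v list" where ys: "length ys = length ls" "distinct ys" "set ys \<inter> set xs = {}"
    using fresh_list[OF inf, of "set xs" "length ls"] by auto
  have "\<exists>v \<theta>. AP ar R en (ls!k) v \<and> zeta en (subst \<sigma> (us!k)) = subst \<theta> v \<and> vars v \<inter> (set xs \<union> set ys) = {} \<and> linear v"
  proof (rule AP_exists[OF inf])
    show "is_ctr_trm R (ls!k)" using l(2) k by (simp add: list_all_length)
    show "wf_trm ar (ls!k)" using l(3) l(1) k by (simp add: list_all_length)
    show "linear (ls!k)" using linear_nth[of f' ls k] linl l k by simp
    show "lnf (us!k)" using lnfu ku by (simp add: list_all_length)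
    show "linear (us!k)" using linear_nth[OF linu ku] .
    show "wf_lterm ar R (subst \<sigma> (us!k))" using wfs ss ku by (simp add: list_all_length)
    show "vars (us!k) \<inter> vars (ls!k) = {}" using disu l k ku nth_mem by fastforce
  qed (use k in auto)
  then obtain v \<theta> where v: "AP ar R en (ls!k) v" "zeta en (subst \<sigma> (us!k)) = subst \<theta> v"
    "vars v \<inter> (set xs \<union> set ys) = {}" "linear v" by blast
  define F where "F = flags en Q f"
  have lenF: "length F = mf en f" by (simp add: F_def flags_def mf_def)
  obtain \<theta>x where \<theta>x: "\<forall>n<length xs. \<theta>x (xs!n) = F!n"
    using subst_of_list[OF xs(2), of F] xs lenF by auto
  obtain \<theta>y where \<theta>y: "\<forall>n<length ys. \<theta>y (ys!n) = map (zeta en) ss ! n"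
    using subst_of_list[OF ys(2), of "map (zeta en) ss"] ys lenu len by auto
  define \<theta>' where "\<theta>' x = (if x \<in> vars v then \<theta> x else if x \<in> set xs then \<theta>x x else \<theta>y x)" for x
  have mx: "map \<theta>' xs = F"
  proof (rule nth_equalityI)
    fix n assume "n < length (map \<theta>' xs)"
    then have n: "n < length xs" by simp
    then have "xs!n \<notin> vars v" "xs!n \<in> set xs" using v(3) nth_mem by blast+
    then show "map \<theta>' xs ! n = F ! n" using \<theta>x n by (simp add: \<theta>'_def)
  qed (use xs lenF in simp)
  have my: "map \<theta>' ys = map (zeta en) ss"
  proof (rule nth_equalityI)
    fix n assume "n < length (map \<theta>' ys)"
    then have n: "n < length ys" by simp
    then have "ys!n \<notin> vars v" "ys!n \<notin> set xs" using v(3) ys(3) nth_mem by blast+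
    then show "map \<theta>' ys ! n = map (zeta en) ss ! n" using \<theta>y n by (simp add: \<theta>'_def)
  qed (use ys lenu len in simp)
  have mv: "subst \<theta>' v = zeta en (ss!k)"
  proof -
    have "subst \<theta>' v = subst \<theta> v" by (rule subst_cong) (simp add: \<theta>'_def)
    also have "\<dots> = zeta en (subst \<sigma> (us!k))" using v(2) by simp
    also have "\<dots> = zeta en (ss!k)" using ss ku by simp
    finally show ?thesis .
  qed
  have lin: "linear (Fun (HF f) (ins (map Var ys) (Suc k) [v] @ ins (map Var xs) i [htop]))"
  proof -
    have vl: "varlist (Fun (HF f) (ins (map Var ys) (Suc k) [v] @ ins (map Var xs) i [htop]))
       = (take (Suc k - 1) ys @ varlist v @ drop (Suc k) ys) @ (take (i-1) xs @ [] @ drop i xs)"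
      using varlist_ins[of ys "Suc k" "[v]"] varlist_ins[of xs i "[htop]"] by simp
    have d1: "distinct (take (Suc k - 1) ys @ varlist v @ drop (Suc k) ys)"
      by (rule distinct_ins_vars) (use ys v in \<open>auto simp: linear_varlist\<close>)
    have d2: "distinct (take (i-1) xs @ [] @ drop i xs)"
      by (rule distinct_ins_vars) (use xs i in auto)
    have s1: "set (take (Suc k - 1) ys @ varlist v @ drop (Suc k) ys) \<subseteq> set ys \<union> vars v"
      by (auto dest: in_set_takeD in_set_dropD)
    have s2: "set (take (i-1) xs @ [] @ drop i xs) \<subseteq> set xs"
      by (auto dest: in_set_takeD in_set_dropD)
    have dis: "set (take (Suc k - 1) ys @ varlist v @ drop (Suc k) ys) \<inter> set (take (i-1) xs @ [] @ drop i xs) = {}"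
      using s1 s2 ys(3) v(3) by blast
    show ?thesis unfolding linear_varlist vl using d1 d2 dis by (subst distinct_append) blast
  qed
  have j1: "1 \<le> Suc k" by simp
  have j2: "Suc k \<le> length ls" using k by simp
  have ap': "AP ar R en (ls ! (Suc k - 1)) v" using v(1) by simp
  have mem: "(Fun (HF f) (ins (map Var ys) (Suc k) [v] @ ins (map Var xs) i [htop]),
              Fun (HF f) (ins (map Var ys) (Suc k) [v] @ ins (map Var xs) i [hbot]), 0) \<in> Xi ar R en"
    by (rule Xi6[OF i(1) i(2) i3 j1 j2 ap' xs(1) ys(1) refl lin])
  note st = root_cstep[OF mem, where \<sigma> = \<theta>' and \<mu> = "mu ar"]
  have sV: "map (subst \<theta>') (map Var zs) = map \<theta>' zs" for zs by simp
  have ei: "ins (map (zeta en) ss) (Suc k) [zeta en (ss!k)] = map (zeta en) ss"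
    using ins_nth[of "Suc k" "map (zeta en) ss"] k lenu len by simp
  have iF: "i \<le> length (en f)" using i(2) by (simp add: mf_def)
  have ft: "ins F i [htop] = F" unfolding F_def by (rule flags_top[where en=en and f=f, OF i(1) iF i(3) rho])
  have fb: "ins F i [hbot] = flags en (Q - {(l, r, cs)}) f" unfolding F_def
    by (rule flags_remove[where en=en and f=f, OF strong_en(2)[OF strong] i(1) iF i(3)])
  have e1: "subst \<theta>' (Fun (HF f) (ins (map Var ys) (Suc k) [v] @ ins (map Var xs) i [htop])) = zeta en (Fun (LD f Q) ss)"
    by (simp only: subst.simps map_append map_ins sV mx my mv ei ft list.map zeta.simps)
       (simp add: F_def flags_def)
  have e2: "subst \<theta>' (Fun (HF f) (ins (map Var ys) (Suc k) [v] @ ins (map Var xs) i [hbot])) = zeta en (Fun (LD f (Q - {(l, r, cs)})) ss)"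
    by (simp only: subst.simps map_append map_ins sV mx my mv ei fb list.map zeta.simps)
       (simp add: flags_def)
  show ?thesis using st unfolding e1 e2 .
qed

lemma main:
  fixes R :: "('f,'v) crule set"
  assumes inf: "infinite (UNIV :: 'v set)" and strong: "strong_cctrs ar R en"
  shows "lstep R s t n \<Longrightarrow> wf_lterm ar R s \<longrightarrow> wf_lterm ar R t \<and> cplus (Xi ar R en) (mu ar) (zeta en s) (zeta en t) n"
    and "lsteps R s' t' n' \<Longrightarrow> wf_lterm ar R s' \<longrightarrow> wf_lterm ar R t' \<and> csteps (Xi ar R en) (mu ar) (zeta en s') (zeta en t') n'"
proof (induction rule: lstep_lsteps.inducts)
  case (bot_step \<rho> l r cs Q us ss f \<sigma>)
  show ?case
  proof
    assume wfs: "wf_lterm ar R (Fun (LD f Q) ss)"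
    have "wf_lterm ar R (Fun (LD f (Q - {\<rho>})) ss)" using wfs by auto
    moreover have "cstep (Xi ar R en) (mu ar) (zeta en (Fun (LD f Q) ss)) (zeta en (Fun (LD f (Q - {(l, r, cs)})) ss)) 0"
      by (rule bot_sim[OF inf strong wfs]) (use bot_step in auto)
    ultimately show "wf_lterm ar R (Fun (LD f (Q - {\<rho>})) ss) \<and> cplus (Xi ar R en) (mu ar) (zeta en (Fun (LD f Q) ss)) (zeta en (Fun (LD f (Q - {\<rho>})) ss)) 0"
      using bot_step(1) cstep_cplus by blast
  qed
next
  case (succ_step \<rho> f ls r cs Q ns \<sigma>)
  show ?case
  proof
    assume wfs: "wf_lterm ar R (Fun (LD f Q) (map (\<lambda>l. subst \<sigma> (label R l)) ls))"
    obtain i xs \<sigma>' where S: "sim ar R en f Q ls r cs \<sigma> i xs \<sigma>'"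
      using sim_exists[OF inf strong wfs] succ_step(1,2) by blast
    show "wf_lterm ar R (subst \<sigma> (label R r)) \<and> cplus (Xi ar R en) (mu ar) (zeta en (Fun (LD f Q) (map (\<lambda>l. subst \<sigma> (label R l)) ls))) (zeta en (subst \<sigma> (label R r))) (Suc (sum_list ns))"
      by (rule sim.succ_case[OF S succ_step(3)]) (use succ_step(4) in blast)
  qed
next
  case (fail_step \<rho> f ls r cs Q j ns \<sigma> \<tau> u m)
  show ?case
  proof
    assume wfs: "wf_lterm ar R (Fun (LD f Q) (map (\<lambda>l. subst \<sigma> (label R l)) ls))"
    obtain i xs \<sigma>' where S: "sim ar R en f Q ls r cs \<sigma> i xs \<sigma>'"
      using sim_exists[OF inf strong wfs] fail_step(1,2) by blast
    have "wf_lterm ar R (Fun (LD f (Q - {(Fun f ls, r, cs)})) (map (\<lambda>l. subst \<sigma> (label R l)) ls)) \<and>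
      cplus (Xi ar R en) (mu ar) (zeta en (Fun (LD f Q) (map (\<lambda>l. subst \<sigma> (label R l)) ls)))
        (zeta en (Fun (LD f (Q - {(Fun f ls, r, cs)})) (map (\<lambda>l. subst \<sigma> (label R l)) ls))) (sum_list ns + m)"
      by (rule sim.fail_case[OF S inf]) (use fail_step in blast)+
    then show "wf_lterm ar R (Fun (LD f (Q - {\<rho>})) (map (\<lambda>l. subst \<sigma> (label R l)) ls)) \<and>
      cplus (Xi ar R en) (mu ar) (zeta en (Fun (LD f Q) (map (\<lambda>l. subst \<sigma> (label R l)) ls)))
        (zeta en (Fun (LD f (Q - {\<rho>})) (map (\<lambda>l. subst \<sigma> (label R l)) ls))) (sum_list ns + m)"
      using fail_step(1) by simp
  qed
next
  case (ctxt_step i ts u n g)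
  show ?case
  proof
    assume wfs: "wf_lterm ar R (Fun g ts)"
    have "wf_lterm ar R (ts!i)" using wf_lterm_nth[OF wfs ctxt_step(1)] .
    then have u: "wf_lterm ar R u" "cplus (Xi ar R en) (mu ar) (zeta en (ts!i)) (zeta en u) n" using ctxt_step(3) by auto
    show "wf_lterm ar R (Fun g (ts[i := u])) \<and> cplus (Xi ar R en) (mu ar) (zeta en (Fun g ts)) (zeta en (Fun g (ts[i := u]))) n"
      using wf_lterm_upd[OF wfs ctxt_step(1) u(1)] zeta_ctxt[OF wfs ctxt_step(1) u(2)] by blast
  qed
next
  case (steps_refl s)
  then show ?case by (auto intro: csteps.intros)
next
  case (steps_step s t n u m)
  show ?case
  proof
    assume "wf_lterm ar R s"
    then have 1: "wf_lterm ar R t" "cplus (Xi ar R en) (mu ar) (zeta en s) (zeta en t) n" using steps_step(2) by auto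
    then have 2: "wf_lterm ar R u" "csteps (Xi ar R en) (mu ar) (zeta en t) (zeta en u) m" using steps_step(4) by auto
    show "wf_lterm ar R u \<and> csteps (Xi ar R en) (mu ar) (zeta en s) (zeta en u) (n + m)"
      using 2 csteps_trans[OF cplus_csteps[OF 1(2)] 2(2)] by blast
  qed
qed

lemma lcond_sim:
  fixes R :: "('f,'v) crule set"
  assumes inf: "infinite (UNIV :: 'v set)" and strong: "strong_cctrs ar R en"
  shows "lcond R s t \<Longrightarrow> wf_lterm ar R s \<Longrightarrow> wf_lterm ar R t \<and> (\<exists>D c. cplus (Xi ar R en) (mu ar) (zeta en s) D c \<and> actsub (mu ar) D (zeta en t))"
proof (induction rule: lcond.induct)
  case (root_cond \<rho> f ls r cs Q j \<sigma>)
  note wfs = root_cond(5)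
  obtain i xs \<sigma>' where S: "sim ar R en f Q ls r cs \<sigma> i xs \<sigma>'"
    using sim_exists[OF inf strong wfs] root_cond(1,2) by blast
  show ?case
  proof (rule sim.cond_case[OF S root_cond(3)], intro allI impI)
    fix p assume p: "p < j" "wf_lterm ar R (subst \<sigma> (label R (fst (cs ! p))))"
    then obtain n where "lsteps R (subst \<sigma> (label R (fst (cs ! p)))) (subst \<sigma> (label R (snd (cs ! p)))) n"
      using root_cond(4) by blast
    then show "wf_lterm ar R (subst \<sigma> (label R (snd (cs ! p)))) \<and>
        (\<exists>n. csteps (Xi ar R en) (mu ar) (zeta en (subst \<sigma> (label R (fst (cs ! p))))) (zeta en (subst \<sigma> (label R (snd (cs ! p))))) n)"
      using main(2)[OF inf strong] p(2) by blast
  qed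
next
  case (ctxt_cond i ts t g)
  have "wf_lterm ar R (ts!i)" using wf_lterm_nth[OF ctxt_cond(4) ctxt_cond(1)] .
  then obtain D c where D: "wf_lterm ar R t" "cplus (Xi ar R en) (mu ar) (zeta en (ts!i)) D c" "actsub (mu ar) D (zeta en t)"
    using ctxt_cond(3) by blast
  obtain T' where T': "cplus (Xi ar R en) (mu ar) (zeta en (Fun g ts)) T' c" "actsub (mu ar) T' D"
    using actsub_cplus[OF D(2) zeta_actsub[OF ctxt_cond(4) ctxt_cond(1)]] by blast
  show ?case using D(1) T' actsub_trans[OF T'(2) D(3)] by blast
qed

lemma csteps_rtranclp: "csteps S \<mu> s t n \<Longrightarrow> (\<lambda>a b. \<exists>c. cstep S \<mu> a b c)\<^sup>*\<^sup>* s t"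
  by (induction rule: csteps.induct) (auto intro: converse_rtranclp_into_rtranclp)

lemma infinite_from_set:
  assumes "x0 \<in> M" "\<forall>x\<in>M. \<exists>y\<in>M. st x y"
  shows "\<exists>S. S 0 = x0 \<and> (\<forall>i. st (S i) (S (Suc i)))"
proof -
  define S where "S n = rec_nat x0 (\<lambda>_ x. SOME y. y \<in> M \<and> st x y) n" for n
  have S0: "S 0 = x0" by (simp add: S_def)
  have SS: "S (Suc n) = (SOME y. y \<in> M \<and> st (S n) y)" for n by (simp add: S_def)
  have M: "S n \<in> M" for n
  proof (induction n)
    case 0 then show ?case using S0 assms(1) by simp
  next
    case (Suc n)
    then have "\<exists>y. y \<in> M \<and> st (S n) y" using assms(2) by blast
    then show ?case unfolding SS by (rule someI2_ex) blast
  qed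
  have "st (S n) (S (Suc n))" for n
  proof -
    have "\<exists>y. y \<in> M \<and> st (S n) y" using assms(2) M by blast
    then show ?thesis unfolding SS by (rule someI2_ex) blast
  qed
  then show ?thesis using S0 by blast
qed

lemma inf_part:
  fixes R :: "('f,'v) crule set"
  assumes inf: "infinite (UNIV :: 'v set)" and strong: "strong_cctrs ar R en"
    and wf: "wf_lterm ar R s" and li: "linf R s"
  shows "\<exists>S. S 0 = zeta en s \<and> (\<forall>i. \<exists>c. cstep (Xi ar R en) (mu ar) (S i) (S (Suc i)) c)"
proof -
  obtain S where S: "S 0 = s" "\<forall>i. (\<exists>n. lstep R (S i) (S (Suc i)) n) \<or> lcond R (S i) (S (Suc i))"
    using li unfolding linf_def by blast
  have wfS: "wf_lterm ar R (S i)" for i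
  proof (induction i)
    case 0 then show ?case using S wf by simp
  next
    case (Suc i)
    then show ?case using S(2) main(1)[OF inf strong] lcond_sim[OF inf strong] by blast
  qed
  define st where "st a b = (\<exists>c. cstep (Xi ar R en) (mu ar) a b c)" for a b
  define M where "M = {T. \<exists>i. actsub (mu ar) T (zeta en (S i))}"
  have stepM: "\<exists>T' c. T' \<in> M \<and> cplus (Xi ar R en) (mu ar) T T' c" if TM: "T \<in> M" for T
  proof -
    obtain i where T: "actsub (mu ar) T (zeta en (S i))" using TM unfolding M_def by blast
    show ?thesis
    proof (cases "\<exists>n. lstep R (S i) (S (Suc i)) n")
      case True
      then obtain n where "lstep R (S i) (S (Suc i)) n" by blast
      then have "cplus (Xi ar R en) (mu ar) (zeta en (S i)) (zeta en (S (Suc i))) n"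
        using main(1)[OF inf strong] wfS by blast
      from actsub_cplus[OF this T] obtain T' where "cplus (Xi ar R en) (mu ar) T T' n" "actsub (mu ar) T' (zeta en (S (Suc i)))"
        by blast
      then show ?thesis unfolding M_def by blast
    next
      case False
      then have "lcond R (S i) (S (Suc i))" using S(2) by blast
      then obtain D c where D: "cplus (Xi ar R en) (mu ar) (zeta en (S i)) D c" "actsub (mu ar) D (zeta en (S (Suc i)))"
        using lcond_sim[OF inf strong] wfS by blast
      from actsub_cplus[OF D(1) T] obtain T' where "cplus (Xi ar R en) (mu ar) T T' c" "actsub (mu ar) T' D"
        by blast
      then show ?thesis using actsub_trans D(2) unfolding M_def by blast
    qed
  qed
  define M' where "M' = {x. \<exists>y\<in>M. st\<^sup>*\<^sup>* x y}"
  have "zeta en s \<in> M'" unfolding M'_def M_def using S(1) as_refl by blast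
  moreover have "\<forall>x\<in>M'. \<exists>y\<in>M'. st x y"
  proof
    fix x assume "x \<in> M'"
    then obtain y where y: "y \<in> M" "st\<^sup>*\<^sup>* x y" unfolding M'_def by blast
    from y(2) show "\<exists>y\<in>M'. st x y"
    proof (cases rule: converse_rtranclpE)
      case base
      then obtain T' c where T': "T' \<in> M" "cplus (Xi ar R en) (mu ar) y T' c" using stepM y(1) by blast
      then obtain u c1 m where u: "cstep (Xi ar R en) (mu ar) y u c1" "csteps (Xi ar R en) (mu ar) u T' m"
        unfolding cplus_def by blast
      have "u \<in> M'" unfolding M'_def st_def using T'(1) csteps_rtranclp[OF u(2)] by blast
      then show ?thesis using u(1) base unfolding st_def by blast
    next
      case (step x')
      then have "x' \<in> M'" using y(1) unfolding M'_def by blast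
      then show ?thesis using step by blast
    qed
  qed
  ultimately obtain S' where "S' 0 = zeta en s" "\<forall>i. st (S' i) (S' (Suc i))"
    using infinite_from_set[of "zeta en s" M' st] by blast
  then show ?thesis unfolding st_def by blast
qed

theorem theorem5:
  fixes R :: "('f, 'v) crule set" and en :: "'f \<Rightarrow> ('f, 'v) crule list" and ar :: "'f \<Rightarrow> nat"
    and s t :: "('f, 'v) lterm" and N :: nat
  assumes "infinite (UNIV :: 'v set)"
    and "strong_cctrs ar R en"
    and "wf_lterm ar R s" and "wf_lterm ar R t"
  shows "(lsteps R s t N \<longrightarrow> csteps (Xi ar R en) (mu ar) (zeta en s) (zeta en t) N)
       \<and> (linf R s \<longrightarrow> (\<exists>S. S 0 = zeta en s \<and> (\<forall>i. \<exists>c. cstep (Xi ar R en) (mu ar) (S i) (S (Suc i)) c)))"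
  using main(2)[OF assms(1,2)] inf_part[OF assms(1,2,3)] assms(3) by blast

end
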